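(* Let real-valued random variables be generated by $$X = qA + E_X,\qquad H = bA + E_H,\qquad Y = cX + dH + E_Y,$$ where $A, E_X, E_H, E_Y$ are mutually independent, $A$ has a density $p_A$, and $q,b,c,d\in\mathbb{R}$ are constants ($H$ is unobserved). Let $E := E_Y + dE_H$, and for constants $\alpha\in\mathbb{R}$ and $\beta\neq 0$ let $\widehat{Y} := \alpha A + \beta X$. Assume $c\neq 0$ and $qc+bd\neq 0$. Assume the densities $p_{E_X}$ and $p_E$ are positive on all of $\mathbb{R}$, and that $f_2:=\log p_{E_X}$ and $f_3:=\log p_E$ are three times differentiable. If at most one of $E_X$ and $E$ is Gaussian, then $\widehat{Y}$ is not conditionally independent of $A$ given $Y$ (for every such choice of $\alpha$ and $\beta\ne 0$).
   Context: Conditional independence of $U$ and $V$ given $W$ is written $U \perp V \mid W$. The statement "$\widehat{Y}\perp A\mid Y$" is the Equalized Odds fairness criterion for the predictor $\widehat{Y}$, the protected feature $A$ and the target $Y$. *)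

theory Defs
  imports "HOL-Probability.Probability"
begin

definition gen_sigma :: "'a measure \<Rightarrow> ('a \<Rightarrow> real) \<Rightarrow> 'a measure" where
  "gen_sigma M W = vimage_algebra (space M) W borel"

definition cond_indep :: "'a measure \<Rightarrow> ('a \<Rightarrow> real) \<Rightarrow> ('a \<Rightarrow> real) \<Rightarrow> ('a \<Rightarrow> real) \<Rightarrow> bool" where
  "cond_indep M U V W \<longleftrightarrow>
     (\<forall>S \<in> sets borel. \<forall>T \<in> sets borel.
        AE \<omega> in M.
          real_cond_exp M (gen_sigma M W) (\<lambda>x. indicator S (U x) * indicator T (V x)) \<omega> =
          real_cond_exp M (gen_sigma M W) (\<lambda>x. indicator S (U x)) \<omega> *
          real_cond_exp M (gen_sigma M W) (\<lambda>x. indicator T (V x)) \<omega>)"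

definition gaussian_rv :: "'a measure \<Rightarrow> ('a \<Rightarrow> real) \<Rightarrow> bool" where
  "gaussian_rv M Z \<longleftrightarrow>
     (\<exists>\<mu> \<sigma>. \<sigma> > 0 \<and> distributed M lborel Z (\<lambda>x. ennreal (normal_density \<mu> \<sigma> x)))"

definition thrice_differentiable :: "(real \<Rightarrow> real) \<Rightarrow> bool" where
  "thrice_differentiable f \<longleftrightarrow> (\<forall>k < 3. \<forall>x. (deriv ^^ k) f differentiable (at x))"

end

theory Submission
  imports Defs
begin

lemma deriv_at:
  assumes "f differentiable (at x)"
  shows "(f has_real_derivative deriv f x) (at x)"
  using assms DERIV_deriv_iff_real_differentiable by blast

lemma quad_of_shift:
  fixes f :: "real \<Rightarrow> real"
  assumes td: "thrice_differentiable f"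
    and H: "\<And>t x y. deriv f (x+t) - deriv f x = deriv f (y+t) - deriv f y"
  shows "\<exists>l m n. (\<forall>x. f x = l/2*x^2 + m*x + n) \<and> (\<forall>x. deriv f x = l*x + m)"
proof -
  define g where "g = deriv f"
  define g' where "g' = deriv g"
  have td': "\<forall>k<3. \<forall>x. (deriv ^^ k) f differentiable (at x)" using td unfolding thrice_differentiable_def .
  have d0: "\<And>x. f differentiable (at x)" using td'[rule_format, of 0] by simp
  have d1: "\<And>x. g differentiable (at x)" using td'[rule_format, of 1] unfolding g_def by simp
  have Df: "\<And>x. (f has_real_derivative g x) (at x)" unfolding g_def using d0 deriv_at by blast
  have Dg: "\<And>x. (g has_real_derivative g' x) (at x)" unfolding g'_def using d1 deriv_at by blast
  have g'c: "g' x = g' 0" for x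
  proof -
    have e: "(\<lambda>z. g (z + x) - g z) = (\<lambda>z. g (0 + x) - g 0)"
      using H unfolding g_def by (intro ext) metis
    have a: "((\<lambda>z. g (z + x)) has_real_derivative g' (0 + x) * 1) (at 0)"
      by (rule DERIV_chain2[OF Dg]) (auto intro!: derivative_eq_intros)
    have "((\<lambda>z. g (z + x) - g z) has_real_derivative g' (0 + x) - g' 0) (at 0)"
      using DERIV_diff[OF a Dg[of 0]] by simp
    moreover have "((\<lambda>z. g (z + x) - g z) has_real_derivative 0) (at 0)"
      unfolding e by simp
    ultimately have "g' (0+x) - g' 0 = 0" by (rule DERIV_unique)
    then show ?thesis by simp
  qed
  define l where "l = g' 0"
  define m where "m = g 0"
  have gl: "g x = l*x + m" for x
  proof -
    have "\<And>z. ((\<lambda>z. g z - l*z) has_real_derivative 0) (at z)"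
    proof -
      fix z
      have "((\<lambda>z. g z - l*z) has_real_derivative g' z - l) (at z)"
        by (auto intro!: derivative_eq_intros Dg)
      then show "((\<lambda>z. g z - l*z) has_real_derivative 0) (at z)" using g'c[of z] unfolding l_def by simp
    qed
    then have "g x - l*x = g 0 - l*0" using DERIV_isconst_all[of "\<lambda>z. g z - l*z"] by blast
    then show ?thesis unfolding m_def by simp
  qed
  define n where "n = f 0"
  have "f x = l/2*x^2 + m*x + n" for x
  proof -
    have "\<And>z. ((\<lambda>z. f z - (l/2*z^2 + m*z)) has_real_derivative 0) (at z)"
    proof -
      fix z
      have "((\<lambda>z. f z - (l/2*z^2 + m*z)) has_real_derivative g z - (l/2*(2*z) + m)) (at z)"
        by (auto intro!: derivative_eq_intros Df)
      then show "((\<lambda>z. f z - (l/2*z^2 + m*z)) has_real_derivative 0) (at z)" using gl by simp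
    qed
    then have "f x - (l/2*x^2 + m*x) = f 0 - (l/2*0^2 + m*0)" using DERIV_isconst_all[of "\<lambda>z. f z - (l/2*z^2 + m*z)"] by blast
    then show ?thesis unfolding n_def by simp
  qed
  then show ?thesis using gl unfolding g_def by blast
qed

lemma density_total:
  assumes "prob_space M" "distributed M lborel Z (\<lambda>x. ennreal (p x))"
  shows "(\<integral>\<^sup>+x. ennreal (p x) \<partial>lborel) = 1"
proof -
  interpret prob_space M by fact
  have Zm: "Z \<in> measurable M lborel" using assms(2) distributed_measurable by blast
  have "emeasure (distr M lborel Z) UNIV = 1"
    using Zm by (simp add: emeasure_distr emeasure_space_1)
  moreover have "distr M lborel Z = density lborel (\<lambda>x. ennreal (p x))"
    using distributed_distr_eq_density[OF assms(2)] .
  moreover have "(\<lambda>x. ennreal (p x)) \<in> borel_measurable lborel"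
    using assms(2) distributed_borel_measurable by blast
  ultimately show ?thesis
    by (simp add: emeasure_density)
qed

lemma exp_lin_bound:
  fixes m n :: real
  shows "\<exists>S \<in> {{0..}, {..0}}. \<forall>x\<in>S. exp n \<le> exp (m*x + n)"
proof (cases "m \<ge> 0")
  case True
  then have "\<forall>x\<in>{0::real..}. exp n \<le> exp (m*x + n)" by auto
  then show ?thesis by blast
next
  case False
  then have "\<forall>x\<in>{..0::real}. exp n \<le> exp (m*x + n)" 
    by (auto simp: mult_nonpos_nonpos)
  then show ?thesis by blast
qed

lemma gauss_or_false:
  assumes M: "prob_space M" and D: "distributed M lborel Z (\<lambda>x. ennreal (p x))"
    and pos: "\<And>x. p x > 0" and Q: "\<And>x. ln (p x) = l/2*x^2 + m*x + n"
  shows "l < 0 \<and> gaussian_rv M Z"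
proof -
  have tot: "(\<integral>\<^sup>+x. ennreal (p x) \<partial>lborel) = 1" using density_total[OF M D] .
  have pe: "p x = exp (l/2*x^2 + m*x + n)" for x using Q[of x] pos[of x] by (metis exp_ln)
  have l: "l < 0"
  proof (rule ccontr)
    assume "\<not> l < 0"
    then have l0: "l \<ge> 0" by simp
    obtain S where S: "S \<in> {{0..}, {..0}}" "\<forall>x\<in>S. exp n \<le> exp (m*x + n)"
      using exp_lin_bound by blast
    have pS: "exp n \<le> p x" if "x \<in> S" for x
    proof -
      have "0 \<le> l/2*x^2" using l0 by simp
      then have "m*x + n \<le> l/2*x^2 + m*x + n" by linarith
      then have e2: "exp (m*x+n) \<le> p x" unfolding pe[of x] by simp
      have e1: "exp n \<le> exp (m*x+n)" using S(2) that by blast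
      show ?thesis using e1 e2 by linarith
    qed
    have bnd: "exp n * real N \<le> 1" for N :: nat
    proof -
      define I where "I = (if S = {0..} then {0..real N} else {-real N..0})"
      have IS: "I \<subseteq> S" using S(1) unfolding I_def by auto
      have mI: "emeasure lborel I = ennreal (real N)" unfolding I_def by auto
      have "ennreal (exp n * real N) = (\<integral>\<^sup>+x. ennreal (exp n) * indicator I x \<partial>lborel)"
        using mI unfolding I_def by (auto simp: nn_integral_cmult_indicator ennreal_mult)
      also have "\<dots> \<le> (\<integral>\<^sup>+x. ennreal (p x) \<partial>lborel)"
        using IS pS by (intro nn_integral_mono) (auto split: split_indicator intro!: ennreal_leI)
      finally show ?thesis using tot by simp
    qed
    obtain N :: nat where "real N > 1 / exp n" using reals_Archimedean2 by blast
    then have "exp n * real N > 1" by (simp add: field_simps)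
    with bnd[of N] show False by simp
  qed
  define sd where "sd = sqrt (-1/l)"
  define mu where "mu = -m/l"
  define K where "K = exp (n - m^2/(2*l)) * sqrt (2*pi* sd^2)"
  have il: "0 < -1/l" using l by (simp add: field_simps)
  have sp: "sd > 0" unfolding sd_def using il by simp
  have s2: "sd^2 = -1/l" unfolding sd_def using il by simp
  have pK: "p x = K * normal_density mu sd x" for x
  proof -
    have "(-((x - mu)^2))/(2 * sd^2) = l/2*x^2 + m*x + n - (n - m^2/(2*l))"
      unfolding s2 mu_def using l by (simp add: field_simps power2_eq_square)
    then have "exp (l/2*x^2 + m*x + n) = exp (n - m^2/(2*l)) * exp ((-((x - mu)^2))/(2 * sd^2))"
      by (simp add: exp_add[symmetric])
    moreover have "sqrt (2*pi* sd^2) > 0" using sp by simp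
    moreover have "sd \<noteq> 0" using sp by simp
    ultimately show ?thesis unfolding pe K_def normal_density_def by (simp add: field_simps)
  qed
  have Kpos: "K > 0" unfolding K_def using sp by (intro mult_pos_pos) auto
  have "(\<integral>\<^sup>+x. ennreal (normal_density mu sd x) \<partial>lborel) = 1"
  proof -
    interpret N: prob_space "density lborel (normal_density mu sd)" using sp by (rule prob_space_normal_density)
    show ?thesis using N.emeasure_space_1 by (simp add: emeasure_density)
  qed
  moreover have "(\<integral>\<^sup>+x. ennreal (p x) \<partial>lborel) = ennreal K * (\<integral>\<^sup>+x. ennreal (normal_density mu sd x) \<partial>lborel)"
    unfolding pK using Kpos by (subst nn_integral_cmult[symmetric]) (auto simp: ennreal_mult)
  ultimately have "ennreal K = 1" using tot by simp
  then have K1: "K = 1" using Kpos by simp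
  have "(\<lambda>x. ennreal (p x)) = (\<lambda>x. ennreal (normal_density mu sd x))"
    using pK K1 by auto
  then have "distributed M lborel Z (\<lambda>x. ennreal (normal_density mu sd x))" using D by simp
  then show ?thesis using l sp unfolding gaussian_rv_def by blast
qed

lemma subgroup_int_mult:
  fixes G :: "real set"
  assumes z: "0 \<in> G" and add: "\<And>x y. x\<in>G \<Longrightarrow> y\<in>G \<Longrightarrow> x+y\<in>G" and neg: "\<And>x. x\<in>G \<Longrightarrow> -x\<in>G"
    and g: "g \<in> G"
  shows "of_int n * g \<in> G"
proof -
  have nat: "real k * g \<in> G" for k :: nat
  proof (induction k)
    case 0 then show ?case using z by simp
  next
    case (Suc k)
    have "real (Suc k) * g = real k * g + g" by (simp add: distrib_right)
    then show ?case using add[OF Suc.IH g] by simp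
  qed
  show ?thesis
  proof (cases "n \<ge> 0")
    case True
    have e: "real (nat n) = of_int n" by (rule of_nat_nat[OF True])
    show ?thesis using nat[of "nat n"] unfolding e .
  next
    case False
    have e: "real (nat (-n)) = of_int (-n)" using False by (intro of_nat_nat) simp
    have "- (of_int (-n) * g) = of_int n * g" by simp
    then show ?thesis using neg[OF nat[of "nat (-n)"]] unfolding e by simp
  qed
qed

lemma closed_subgroup_dich:
  fixes G :: "real set"
  assumes z: "0 \<in> G" and add: "\<And>x y. x\<in>G \<Longrightarrow> y\<in>G \<Longrightarrow> x+y\<in>G" and neg: "\<And>x. x\<in>G \<Longrightarrow> -x\<in>G"
    and cl: "closed G"
  shows "G = UNIV \<or> countable G"
proof (cases "\<forall>e>0. \<exists>g\<in>G. 0<g \<and> g<e")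
  case True
  have "x \<in> G" for x
  proof (rule closed_approachable[OF cl, THEN iffD1], intro allI impI)
    fix e :: real assume "e > 0"
    then obtain g where g: "g \<in> G" "0 < g" "g < e" using True by blast
    define n where "n = floor (x/g)"
    have mem: "of_int n * g \<in> G" using subgroup_int_mult[OF z add neg g(1)] by blast
    have f1: "of_int n \<le> x/g \<and> x/g < of_int (n+1)" unfolding n_def by (rule floor_correct)
    have h1: "of_int n * g \<le> x" using f1 g(2) by (simp add: pos_le_divide_eq)
    have h2: "x < of_int n * g + g" using f1 g(2) by (simp add: pos_divide_less_eq distrib_right)
    have "dist (of_int n * g) x < e" unfolding dist_real_def abs_less_iff using h1 h2 g(3) by linarith
    then show "\<exists>y\<in>G. dist y x < e" using mem by blast
  qed
  then show ?thesis by auto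
next
  case False
  then obtain e where e: "e > 0" "\<And>g. g \<in> G \<Longrightarrow> \<not> (0 < g \<and> g < e)" by auto
  have inj: "inj_on (\<lambda>d. floor (d/e)) G"
  proof (rule inj_onI)
    fix x y assume xy: "x \<in> G" "y \<in> G" "floor (x/e) = floor (y/e)"
    have fx: "of_int \<lfloor>x/e\<rfloor> \<le> x/e \<and> x/e < of_int (\<lfloor>x/e\<rfloor>+1)" by (rule floor_correct)
    have fy: "of_int \<lfloor>y/e\<rfloor> \<le> y/e \<and> y/e < of_int (\<lfloor>y/e\<rfloor>+1)" by (rule floor_correct)
    have fe: "real_of_int \<lfloor>x/e\<rfloor> = real_of_int \<lfloor>y/e\<rfloor>" using xy(3) by simp
    have d0: "x/e - y/e < 1" "y/e - x/e < 1" using fx fy fe by linarith+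
    have d1: "(x - y)/e < 1" "(y - x)/e < 1" using d0 by (simp_all add: diff_divide_distrib)
    have d2: "x - y < e" "y - x < e" using d1 e(1) by (simp_all add: pos_divide_less_eq)
    have g1: "x - y \<in> G" using add[OF xy(1) neg[OF xy(2)]] by simp
    have g2: "y - x \<in> G" using add[OF xy(2) neg[OF xy(1)]] by simp
    show "x = y"
    proof (rule ccontr)
      assume "x \<noteq> y"
      then have "0 < x - y \<or> 0 < y - x" by linarith
      then show False using e(2)[OF g1] e(2)[OF g2] d2 by blast
    qed
  qed
  have "countable ((\<lambda>d. floor (d/e)) ` G)" by (rule countableI_type)
  then have "countable G" using inj by (rule countable_image_inj_on)
  then show ?thesis by simp
qed

lemma AE_cont_eq:
  fixes f g :: "real \<Rightarrow> real"
  assumes ae: "AE x in lborel. f x = g x" and cf: "continuous_on UNIV f" and cg: "continuous_on UNIV g"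
  shows "f x = g x"
proof (rule ccontr)
  assume ne: "f x \<noteq> g x"
  define S where "S = {x. f x \<noteq> g x}"
  have "open S" unfolding S_def by (rule open_Collect_neq[OF cf cg])
  have "x \<in> S" using ne by (simp add: S_def)
  obtain e where e: "e > 0" "ball x e \<subseteq> S" using open_contains_ball_eq[OF \<open>open S\<close>] \<open>x \<in> S\<close> by auto
  have Sm: "S \<in> sets lborel" using borel_open[OF \<open>open S\<close>] by simp
  have SS: "{x \<in> space lborel. \<not> f x = g x} = S" by (simp add: S_def)
  have "{x \<in> space lborel. \<not> f x = g x} \<in> null_sets lborel"
    using AE_iff_null[of lborel "\<lambda>x. f x = g x"] ae Sm unfolding SS by blast
  then have "S \<in> null_sets lborel" unfolding SS .
  then have m0: "emeasure lborel S = 0" by (rule null_setsD1)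
  have sub: "{x-e<..<x+e} \<subseteq> S"
  proof
    fix y assume "y \<in> {x-e<..<x+e}"
    then have "y \<in> ball x e" by (auto simp: dist_real_def abs_less_iff)
    then show "y \<in> S" using e(2) by blast
  qed
  have le: "emeasure lborel {x-e<..<x+e} \<le> emeasure lborel S" using Sm sub by (intro emeasure_mono) auto
  have eq: "emeasure lborel {x-e<..<x+e} = ennreal (2*e)" using e(1) by simp
  have "ennreal (2*e) \<le> 0" using le unfolding m0 eq .
  then have "2*e \<le> 0" using e(1) by (simp add: ennreal_le_iff2)
  then show False using e(1) by simp
qed

lemma deriv_from_R:
  fixes f2 f3 :: "real \<Rightarrow> real"
  assumes d2: "\<And>x. f2 differentiable (at x)" and d3: "\<And>x. f3 differentiable (at x)"
    and R: "\<And>y w1 w2. exp (f2 (w1 - r*a1)) * exp (f3 (y - c*w1 - s*a1)) * (exp (f2 (w2 - r*a2)) * exp (f3 (y - c*w2 - s*a2)))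
       = exp (f2 (w1 - r*a2)) * exp (f3 (y - c*w1 - s*a2)) * (exp (f2 (w2 - r*a1)) * exp (f3 (y - c*w2 - s*a1)))"
  shows "deriv f2 v - deriv f2 (v + r*(a1-a2)) = c * (deriv f3 x - deriv f3 (x + s*(a1-a2)))"
proof -
  define w where "w = v + r*a1"
  define y where "y = x + c*w + s*a1"
  define L where "L = (\<lambda>z. f2 (z - r*a1) + f3 (y - c*z - s*a1) - f2 (z - r*a2) - f3 (y - c*z - s*a2))"
  have Lc: "L z = L w" for z
  proof -
    have "exp (f2 (z - r*a1) + f3 (y - c*z - s*a1) + (f2 (w - r*a2) + f3 (y - c*w - s*a2)))
        = exp (f2 (z - r*a2) + f3 (y - c*z - s*a2) + (f2 (w - r*a1) + f3 (y - c*w - s*a1)))"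
      using R[of z y w] by (simp add: exp_add)
    then have "f2 (z - r*a1) + f3 (y - c*z - s*a1) + (f2 (w - r*a2) + f3 (y - c*w - s*a2))
        = f2 (z - r*a2) + f3 (y - c*z - s*a2) + (f2 (w - r*a1) + f3 (y - c*w - s*a1))"
      by simp
    then show ?thesis unfolding L_def by simp
  qed
  have D2: "\<And>z. (f2 has_real_derivative deriv f2 z) (at z)" using d2 deriv_at by blast
  have D3: "\<And>z. (f3 has_real_derivative deriv f3 z) (at z)" using d3 deriv_at by blast
  have "(L has_real_derivative
      (deriv f2 (w - r*a1) * 1 + deriv f3 (y - c*w - s*a1) * (- c) - deriv f2 (w - r*a2) * 1 - deriv f3 (y - c*w - s*a2) * (- c))) (at w)"
    unfolding L_def
    by (intro DERIV_diff DERIV_add DERIV_chain2[OF D2] DERIV_chain2[OF D3]) (auto intro!: derivative_eq_intros)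
  moreover have "(L has_real_derivative 0) (at w)"
  proof -
    have e: "L = (\<lambda>z. L w)" using Lc by (intro ext) simp
    have "((\<lambda>z. L w) has_real_derivative 0) (at w)" by (rule DERIV_const)
    then show ?thesis by (subst e)
  qed
  ultimately have e: "deriv f2 (w - r*a1) * 1 + deriv f3 (y - c*w - s*a1) * (- c) - deriv f2 (w - r*a2) * 1 - deriv f3 (y - c*w - s*a2) * (- c) = 0"
    by (rule DERIV_unique)
  have "w - r*a1 = v" "y - c*w - s*a1 = x" "w - r*a2 = v + r*(a1-a2)" "y - c*w - s*a2 = x + s*(a1-a2)"
    unfolding w_def y_def by (simp_all add: algebra_simps)
  with e show ?thesis by (simp add: algebra_simps)
qed

lemma td_d0: "thrice_differentiable f \<Longrightarrow> f differentiable (at x)"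
  unfolding thrice_differentiable_def using funpow_0 by (metis zero_less_numeral)

lemma final_analysis:
  fixes f2 f3 :: "real \<Rightarrow> real"
  assumes td2: "thrice_differentiable f2" and td3: "thrice_differentiable f3" and c: "c \<noteq> 0"
    and rs: "r \<noteq> 0 \<or> s \<noteq> 0"
    and G: "\<And>d v x. deriv f2 v - deriv f2 (v + r*d) = c * (deriv f3 x - deriv f3 (x + s*d))"
  shows "(\<exists>m n. \<forall>x. f2 x = 0/2*x^2 + m*x + n) \<or> (\<exists>m n. \<forall>x. f3 x = 0/2*x^2 + m*x + n) \<or>
    ((\<exists>l m n. \<forall>x. f2 x = l/2*x^2 + m*x + n) \<and> (\<exists>l m n. \<forall>x. f3 x = l/2*x^2 + m*x + n))"
proof (cases "s = 0")
  case True
  then have r: "r \<noteq> 0" using rs by simp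
  have G0: "deriv f2 v - deriv f2 (v + r*d) = 0" for v d using G[of v d 0] True by simp
  have sh: "deriv f2 (x+t) - deriv f2 x = deriv f2 (y+t) - deriv f2 y" for t x y
    using G0[of x "t/r"] G0[of y "t/r"] r by simp
  obtain l m n where q: "\<forall>x. f2 x = l/2*x^2 + m*x + n" "\<forall>x. deriv f2 x = l*x + m"
    using quad_of_shift[OF td2 sh] by blast
  have "l * r = 0" using G0[of 0 1] q(2) by simp
  then have "l = 0" using r by simp
  then show ?thesis using q(1) by auto
next
  case False
  have sh3: "deriv f3 (x+t) - deriv f3 x = deriv f3 (y+t) - deriv f3 y" for t x y
  proof -
    have "c * (deriv f3 x - deriv f3 (x + s*(t/s))) = c * (deriv f3 y - deriv f3 (y + s*(t/s)))"
      using G[of 0 "t/s" x] G[of 0 "t/s" y] by simp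
    then have "deriv f3 x - deriv f3 (x + t) = deriv f3 y - deriv f3 (y + t)" using c False by simp
    then show ?thesis by (simp add: add.commute)
  qed
  obtain l3 m3 n3 where q3: "\<forall>x. f3 x = l3/2*x^2 + m3*x + n3" "\<forall>x. deriv f3 x = l3*x + m3"
    using quad_of_shift[OF td3 sh3] by blast
  show ?thesis
  proof (cases "r = 0")
    case True
    have "c * (deriv f3 0 - deriv f3 (0 + s*1)) = 0" using G[of 0 1 0] True by simp
    then have "l3 * s = 0" using q3(2) c by simp
    then have "l3 = 0" using False by simp
    then show ?thesis using q3(1) by auto
  next
    case r: False
    have sh2: "deriv f2 (x+t) - deriv f2 x = deriv f2 (y+t) - deriv f2 y" for t x y
    proof -
      have "deriv f2 x - deriv f2 (x + r*(t/r)) = deriv f2 y - deriv f2 (y + r*(t/r))"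
        using G[of x "t/r" 0] G[of y "t/r" 0] by simp
      then show ?thesis using r by (simp add: add.commute)
    qed
    obtain l2 m2 n2 where q2: "\<forall>x. f2 x = l2/2*x^2 + m2*x + n2"
      using quad_of_shift[OF td2 sh2] by blast
    show ?thesis using q2 q3(1) by blast
  qed
qed

lemma (in prob_space) indep_split:
  fixes X :: "'i \<Rightarrow> 'a \<Rightarrow> real"
  assumes ind: "indep_vars (\<lambda>_. borel) X I" and JL: "J \<inter> L = {}" "J \<subseteq> I" "L \<subseteq> I"
    and F: "F \<in> measurable (PiM J (\<lambda>_. borel)) N1" and G: "G \<in> measurable (PiM L (\<lambda>_. borel)) N2"
  shows "distr M (N1 \<Otimes>\<^sub>M N2) (\<lambda>\<omega>. (F (restrict (\<lambda>i. X i \<omega>) J), G (restrict (\<lambda>i. X i \<omega>) L))) =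
    distr M N1 (\<lambda>\<omega>. F (restrict (\<lambda>i. X i \<omega>) J)) \<Otimes>\<^sub>M distr M N2 (\<lambda>\<omega>. G (restrict (\<lambda>i. X i \<omega>) L))"
proof -
  define rJ where "rJ = (\<lambda>\<omega>. restrict (\<lambda>i. X i \<omega>) J)"
  define rL where "rL = (\<lambda>\<omega>. restrict (\<lambda>i. X i \<omega>) L)"
  have iv: "indep_var (PiM J (\<lambda>_. borel)) rJ (PiM L (\<lambda>_. borel)) rL"
    unfolding rJ_def rL_def by (rule indep_var_restrict[OF ind JL])
  have rJm: "rJ \<in> measurable M (PiM J (\<lambda>_. borel))" using iv by (rule indep_var_rv1)
  have rLm: "rL \<in> measurable M (PiM L (\<lambda>_. borel))" using iv by (rule indep_var_rv2)
  have D: "distr M (PiM J (\<lambda>_. borel)) rJ \<Otimes>\<^sub>M distr M (PiM L (\<lambda>_. borel)) rL =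
      distr M (PiM J (\<lambda>_. borel) \<Otimes>\<^sub>M PiM L (\<lambda>_. borel)) (\<lambda>x. (rJ x, rL x))"
    using iv unfolding indep_var_distribution_eq by simp
  have pm: "(\<lambda>x. (rJ x, rL x)) \<in> measurable M (PiM J (\<lambda>_. borel) \<Otimes>\<^sub>M PiM L (\<lambda>_. borel))"
    using rJm rLm by (rule measurable_Pair)
  have FG: "(\<lambda>(x, y). (F x, G y)) \<in> measurable (PiM J (\<lambda>_. borel) \<Otimes>\<^sub>M PiM L (\<lambda>_. borel)) (N1 \<Otimes>\<^sub>M N2)"
    using F G by measurable
  have "distr M (N1 \<Otimes>\<^sub>M N2) (\<lambda>\<omega>. (F (rJ \<omega>), G (rL \<omega>))) =
      distr (distr M (PiM J (\<lambda>_. borel) \<Otimes>\<^sub>M PiM L (\<lambda>_. borel)) (\<lambda>x. (rJ x, rL x))) (N1 \<Otimes>\<^sub>M N2) (\<lambda>(x, y). (F x, G y))"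
    by (subst distr_distr[OF FG pm]) (simp add: comp_def)
  also have "\<dots> = distr (distr M (PiM J (\<lambda>_. borel)) rJ \<Otimes>\<^sub>M distr M (PiM L (\<lambda>_. borel)) rL) (N1 \<Otimes>\<^sub>M N2) (\<lambda>(x, y). (F x, G y))"
    unfolding D ..
  also have "\<dots> = distr (distr M (PiM J (\<lambda>_. borel)) rJ) N1 F \<Otimes>\<^sub>M distr (distr M (PiM L (\<lambda>_. borel)) rL) N2 G"
  proof (rule pair_measure_distr[symmetric])
    show "F \<in> measurable (distr M (PiM J (\<lambda>_. borel)) rJ) N1" using F by simp
    show "G \<in> measurable (distr M (PiM L (\<lambda>_. borel)) rL) N2" using G by simp
    have p1: "prob_space (distr M (PiM L (\<lambda>_. borel)) rL)" by (rule prob_space_distr[OF rLm])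
    have "prob_space (distr (distr M (PiM L (\<lambda>_. borel)) rL) N2 G)"
      by (rule prob_space.prob_space_distr[OF p1]) (use G in simp)
    then show "sigma_finite_measure (distr (distr M (PiM L (\<lambda>_. borel)) rL) N2 G)"
      by (simp add: prob_space_imp_sigma_finite)
  qed
  also have "\<dots> = distr M N1 (\<lambda>\<omega>. F (rJ \<omega>)) \<Otimes>\<^sub>M distr M N2 (\<lambda>\<omega>. G (rL \<omega>))"
    by (simp add: distr_distr[OF F rJm] distr_distr[OF G rLm] comp_def)
  finally show ?thesis unfolding rJ_def rL_def .
qed

locale cimodel = prob_space M for M :: "'a measure" +
  fixes A XE E W Y :: "'a \<Rightarrow> real" and p2 p3 :: "real \<Rightarrow> real" and r s c :: real
  assumes A_meas[measurable]: "A \<in> borel_measurable M"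
    and jointD: "distr M (borel \<Otimes>\<^sub>M (borel \<Otimes>\<^sub>M borel)) (\<lambda>\<omega>. (A \<omega>, XE \<omega>, E \<omega>)) =
       distr M borel A \<Otimes>\<^sub>M (density lborel (\<lambda>x. ennreal (p2 x)) \<Otimes>\<^sub>M density lborel (\<lambda>x. ennreal (p3 x)))"
    and D2: "distributed M lborel XE (\<lambda>x. ennreal (p2 x))"
    and D3: "distributed M lborel E (\<lambda>x. ennreal (p3 x))"
    and p2pos: "\<And>x. p2 x > 0" and p3pos: "\<And>x. p3 x > 0"
    and p2c: "continuous_on UNIV p2" and p3c: "continuous_on UNIV p3"
    and c0: "c \<noteq> 0"
    and Wdef: "\<And>\<omega>. \<omega> \<in> space M \<Longrightarrow> W \<omega> = r * A \<omega> + XE \<omega>"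
    and Ydef: "\<And>\<omega>. \<omega> \<in> space M \<Longrightarrow> Y \<omega> = c * W \<omega> + s * A \<omega> + E \<omega>"
begin

definition "muA = distr M borel A"
definition "K a w y = ennreal (p2 (w - r*a) * p3 (y - c*w - s*a))"

lemma p2m[measurable]: "p2 \<in> borel_measurable borel" using p2c by (rule borel_measurable_continuous_onI)
lemma p3m[measurable]: "p3 \<in> borel_measurable borel" using p3c by (rule borel_measurable_continuous_onI)

lemma EX_meas[measurable]: "XE \<in> borel_measurable M"
  using distributed_measurable[OF D2] by (simp add: measurable_cong_sets[OF refl sets_lborel])
lemma E_meas[measurable]: "E \<in> borel_measurable M"
  using distributed_measurable[OF D3] by (simp add: measurable_cong_sets[OF refl sets_lborel])
lemma W_meas[measurable]: "W \<in> borel_measurable M"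
  using measurable_cong[of M W "\<lambda>\<omega>. r * A \<omega> + XE \<omega>"] Wdef by simp
lemma Y_meas[measurable]: "Y \<in> borel_measurable M"
proof -
  have "(\<lambda>\<omega>. c * W \<omega> + s * A \<omega> + E \<omega>) \<in> borel_measurable M" by measurable
  then show ?thesis using measurable_cong[of M Y "\<lambda>\<omega>. c * W \<omega> + s * A \<omega> + E \<omega>"] Ydef by simp
qed

lemma K_meas[measurable]: "(\<lambda>x. K (fst x) (fst (snd x)) (snd (snd x))) \<in> borel_measurable (borel \<Otimes>\<^sub>M (borel \<Otimes>\<^sub>M borel))"
  unfolding K_def by measurable

lemma muA_prob: "prob_space muA" unfolding muA_def by (rule prob_space_distr) simp
lemma sets_muA[simp, measurable_cong]: "sets muA = sets borel" unfolding muA_def by simp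
lemma space_muA[simp]: "space muA = UNIV" unfolding muA_def by simp

lemma distr_EX: "distr M borel XE = density lborel (\<lambda>x. ennreal (p2 x))"
proof -
  have "distr M borel XE = distr M lborel XE" by (rule distr_cong) auto
  then show ?thesis using distributed_distr_eq_density[OF D2] by simp
qed
lemma distr_E: "distr M borel E = density lborel (\<lambda>x. ennreal (p3 x))"
proof -
  have "distr M borel E = distr M lborel E" by (rule distr_cong) auto
  then show ?thesis using distributed_distr_eq_density[OF D3] by simp
qed

lemma J:
  assumes g[measurable]: "g \<in> borel_measurable (borel \<Otimes>\<^sub>M (borel \<Otimes>\<^sub>M borel))"
  shows "(\<integral>\<^sup>+\<omega>. g (A \<omega>, XE \<omega>, E \<omega>) \<partial>M) =
    (\<integral>\<^sup>+a. \<integral>\<^sup>+e. \<integral>\<^sup>+z. ennreal (p2 e) * ennreal (p3 z) * g (a, e, z) \<partial>lborel \<partial>lborel \<partial>muA)"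
proof -
  define P2 where "P2 = density lborel (\<lambda>x. ennreal (p2 x))"
  define P3 where "P3 = density lborel (\<lambda>x. ennreal (p3 x))"
  have sP2[measurable_cong]: "sets P2 = sets borel" unfolding P2_def by simp
  have sP3[measurable_cong]: "sets P3 = sets borel" unfolding P3_def by simp
  interpret P2: prob_space P2 unfolding P2_def distr_EX[symmetric] by (rule prob_space_distr) simp
  interpret P3: prob_space P3 unfolding P3_def distr_E[symmetric] by (rule prob_space_distr) simp
  interpret MA: prob_space muA by (rule muA_prob)
  have ind1: "distr M (borel \<Otimes>\<^sub>M (borel \<Otimes>\<^sub>M borel)) (\<lambda>\<omega>. (A \<omega>, XE \<omega>, E \<omega>))
      = muA \<Otimes>\<^sub>M (P2 \<Otimes>\<^sub>M P3)"
    using jointD unfolding muA_def P2_def P3_def .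
  interpret P23: prob_space "P2 \<Otimes>\<^sub>M P3"
    by (rule prob_space_pair) unfold_locales
  have "(\<integral>\<^sup>+\<omega>. g (A \<omega>, XE \<omega>, E \<omega>) \<partial>M) =
      (\<integral>\<^sup>+x. g x \<partial>distr M (borel \<Otimes>\<^sub>M (borel \<Otimes>\<^sub>M borel)) (\<lambda>\<omega>. (A \<omega>, XE \<omega>, E \<omega>)))"
    by (subst nn_integral_distr) auto
  also have "\<dots> = (\<integral>\<^sup>+x. g x \<partial>(muA \<Otimes>\<^sub>M (P2 \<Otimes>\<^sub>M P3)))"
    unfolding ind1 ..
  also have "\<dots> = (\<integral>\<^sup>+a. \<integral>\<^sup>+v. g (a, v) \<partial>(P2 \<Otimes>\<^sub>M P3) \<partial>muA)"
    by (subst P23.nn_integral_fst[symmetric]) auto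
  also have "\<dots> = (\<integral>\<^sup>+a. \<integral>\<^sup>+e. \<integral>\<^sup>+z. g (a, e, z) \<partial>P3 \<partial>P2 \<partial>muA)"
    by (intro nn_integral_cong, subst P3.nn_integral_fst[symmetric]) auto
  also have "\<dots> = (\<integral>\<^sup>+a. \<integral>\<^sup>+e. \<integral>\<^sup>+z. ennreal (p2 e) * ennreal (p3 z) * g (a, e, z) \<partial>lborel \<partial>lborel \<partial>muA)"
  proof (intro nn_integral_cong)
    fix a
    have "(\<integral>\<^sup>+e. \<integral>\<^sup>+z. g (a, e, z) \<partial>P3 \<partial>P2) = (\<integral>\<^sup>+e. ennreal (p2 e) * \<integral>\<^sup>+z. ennreal (p3 z) * g (a, e, z) \<partial>lborel \<partial>lborel)"
      unfolding P2_def P3_def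
      by (subst nn_integral_density; (subst nn_integral_density)?) auto
    also have "\<dots> = (\<integral>\<^sup>+e. \<integral>\<^sup>+z. ennreal (p2 e) * ennreal (p3 z) * g (a, e, z) \<partial>lborel \<partial>lborel)"
      by (intro nn_integral_cong) (simp add: nn_integral_cmult[symmetric] mult.assoc)
    finally show "(\<integral>\<^sup>+e. \<integral>\<^sup>+z. g (a, e, z) \<partial>P3 \<partial>P2) = (\<integral>\<^sup>+e. \<integral>\<^sup>+z. ennreal (p2 e) * ennreal (p3 z) * g (a, e, z) \<partial>lborel \<partial>lborel)" .
  qed
  finally show ?thesis .
qed


lemma nn_transl:
  fixes f :: "real \<Rightarrow> ennreal"
  assumes [measurable]: "f \<in> borel_measurable borel"
  shows "(\<integral>\<^sup>+x. f (t + x) \<partial>lborel) = (\<integral>\<^sup>+x. f x \<partial>lborel)"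
  using nn_integral_real_affine[of f 1 t] by simp

lemma Jp:
  assumes h[measurable]: "h \<in> borel_measurable (borel \<Otimes>\<^sub>M (borel \<Otimes>\<^sub>M borel))"
  shows "(\<integral>\<^sup>+\<omega>. h (A \<omega>, W \<omega>, Y \<omega>) \<partial>M) =
    (\<integral>\<^sup>+a. \<integral>\<^sup>+w. \<integral>\<^sup>+y. K a w y * h (a, w, y) \<partial>lborel \<partial>lborel \<partial>muA)"
proof -
  define g where "g = (\<lambda>(a, e, z). h (a, r*a + e, c*(r*a + e) + s*a + z))"
  have g[measurable]: "g \<in> borel_measurable (borel \<Otimes>\<^sub>M (borel \<Otimes>\<^sub>M borel))"
    unfolding g_def by measurable
  have "(\<integral>\<^sup>+\<omega>. h (A \<omega>, W \<omega>, Y \<omega>) \<partial>M) = (\<integral>\<^sup>+\<omega>. g (A \<omega>, XE \<omega>, E \<omega>) \<partial>M)"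
    by (intro nn_integral_cong) (simp add: g_def Wdef Ydef)
  also have "\<dots> = (\<integral>\<^sup>+a. \<integral>\<^sup>+e. \<integral>\<^sup>+z. ennreal (p2 e) * ennreal (p3 z) * g (a, e, z) \<partial>lborel \<partial>lborel \<partial>muA)"
    by (rule J[OF g])
  also have "\<dots> = (\<integral>\<^sup>+a. \<integral>\<^sup>+w. \<integral>\<^sup>+y. K a w y * h (a, w, y) \<partial>lborel \<partial>lborel \<partial>muA)"
  proof (rule nn_integral_cong)
    fix a :: real
    have inner: "(\<integral>\<^sup>+z. ennreal (p2 e) * ennreal (p3 z) * g (a, e, z) \<partial>lborel) =
      (\<integral>\<^sup>+y. ennreal (p2 e) * ennreal (p3 (y - c*(r*a+e) - s*a)) * h (a, r*a+e, y) \<partial>lborel)" for e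
    proof -
      define t where "t = c*(r*a+e) + s*a"
      have "(\<integral>\<^sup>+y. ennreal (p2 e) * ennreal (p3 (y - c*(r*a+e) - s*a)) * h (a, r*a+e, y) \<partial>lborel)
        = (\<integral>\<^sup>+z. ennreal (p2 e) * ennreal (p3 ((t + z) - c*(r*a+e) - s*a)) * h (a, r*a+e, t + z) \<partial>lborel)"
        by (rule nn_transl[symmetric]) measurable
      also have "\<dots> = (\<integral>\<^sup>+z. ennreal (p2 e) * ennreal (p3 z) * g (a, e, z) \<partial>lborel)"
        by (intro nn_integral_cong) (simp add: g_def t_def algebra_simps)
      finally show ?thesis by simp
    qed
    have "(\<integral>\<^sup>+e. \<integral>\<^sup>+z. ennreal (p2 e) * ennreal (p3 z) * g (a, e, z) \<partial>lborel \<partial>lborel) =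
      (\<integral>\<^sup>+e. \<integral>\<^sup>+y. ennreal (p2 e) * ennreal (p3 (y - c*(r*a+e) - s*a)) * h (a, r*a+e, y) \<partial>lborel \<partial>lborel)"
      by (intro nn_integral_cong inner)
    also have "\<dots> = (\<integral>\<^sup>+e. (\<lambda>w. \<integral>\<^sup>+y. ennreal (p2 (w - r*a)) * ennreal (p3 (y - c*w - s*a)) * h (a, w, y) \<partial>lborel) (r*a + e) \<partial>lborel)"
      by (intro nn_integral_cong) simp
    also have "\<dots> = (\<integral>\<^sup>+w. \<integral>\<^sup>+y. ennreal (p2 (w - r*a)) * ennreal (p3 (y - c*w - s*a)) * h (a, w, y) \<partial>lborel \<partial>lborel)"
      by (rule nn_transl) measurable
    also have "\<dots> = (\<integral>\<^sup>+w. \<integral>\<^sup>+y. K a w y * h (a, w, y) \<partial>lborel \<partial>lborel)"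
      unfolding K_def using p2pos p3pos
      by (intro nn_integral_cong) (simp add: ennreal_mult less_imp_le)
    finally show "(\<integral>\<^sup>+e. \<integral>\<^sup>+z. ennreal (p2 e) * ennreal (p3 z) * g (a, e, z) \<partial>lborel \<partial>lborel) =
      (\<integral>\<^sup>+w. \<integral>\<^sup>+y. K a w y * h (a, w, y) \<partial>lborel \<partial>lborel)" .
  qed
  finally show ?thesis .
qed

lemma Kmeas2[measurable]: "(\<lambda>x. K (fst x) (snd x) y) \<in> borel_measurable (borel \<Otimes>\<^sub>M borel)"
  unfolding K_def by measurable

lemma Jpp:
  assumes h[measurable]: "h \<in> borel_measurable (borel \<Otimes>\<^sub>M (borel \<Otimes>\<^sub>M borel))"
  shows "(\<integral>\<^sup>+\<omega>. h (A \<omega>, W \<omega>, Y \<omega>) \<partial>M) =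
    (\<integral>\<^sup>+y. \<integral>\<^sup>+a. \<integral>\<^sup>+w. K a w y * h (a, w, y) \<partial>lborel \<partial>muA \<partial>lborel)"
proof -
  interpret MA: prob_space muA by (rule muA_prob)
  have PS1: "pair_sigma_finite lborel lborel" by (simp add: pair_sigma_finite_def lborel.sigma_finite_measure_axioms)
  have PS2: "pair_sigma_finite muA lborel" by (simp add: pair_sigma_finite_def lborel.sigma_finite_measure_axioms MA.sigma_finite_measure_axioms)
  have "(\<integral>\<^sup>+\<omega>. h (A \<omega>, W \<omega>, Y \<omega>) \<partial>M) =
    (\<integral>\<^sup>+a. \<integral>\<^sup>+w. \<integral>\<^sup>+y. K a w y * h (a, w, y) \<partial>lborel \<partial>lborel \<partial>muA)" by (rule Jp[OF h])
  also have "\<dots> = (\<integral>\<^sup>+a. \<integral>\<^sup>+y. \<integral>\<^sup>+w. K a w y * h (a, w, y) \<partial>lborel \<partial>lborel \<partial>muA)"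
  proof (rule nn_integral_cong)
    fix a
    show "(\<integral>\<^sup>+w. \<integral>\<^sup>+y. K a w y * h (a, w, y) \<partial>lborel \<partial>lborel) = (\<integral>\<^sup>+y. \<integral>\<^sup>+w. K a w y * h (a, w, y) \<partial>lborel \<partial>lborel)"
      by (rule pair_sigma_finite.Fubini'[OF PS1, symmetric]) (unfold K_def, measurable)
  qed
  also have "\<dots> = (\<integral>\<^sup>+y. \<integral>\<^sup>+a. \<integral>\<^sup>+w. K a w y * h (a, w, y) \<partial>lborel \<partial>muA \<partial>lborel)"
    by (rule pair_sigma_finite.Fubini'[OF PS2, symmetric]) (unfold K_def, measurable)
  finally show ?thesis .
qed

end

lemma AE_False_gen: "(AE x in N. False) \<Longrightarrow> emeasure N (space N) = 0"
  using eventually_False[of "ae_filter N"] ae_filter_eq_bot_iff[of N] by simp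

context cimodel begin

interpretation MA: prob_space muA by (rule muA_prob)

definition "rho T S y = (\<integral>\<^sup>+a. \<integral>\<^sup>+w. K a w y * indicator T a * indicator S w \<partial>lborel \<partial>muA)"
definition "rU y = rho UNIV UNIV y"
definition "Psi T S y = enn2real (rho T S y) / enn2real (rU y)"

lemma rho_meas[measurable]:
  assumes [measurable]: "T \<in> sets borel" "S \<in> sets borel"
  shows "rho T S \<in> borel_measurable borel"
  unfolding rho_def K_def by measurable

lemma rU_meas[measurable]: "rU \<in> borel_measurable borel"
  unfolding rU_def by simp

lemma Psi_meas[measurable]:
  assumes [measurable]: "T \<in> sets borel" "S \<in> sets borel"
  shows "Psi T S \<in> borel_measurable borel"
  unfolding Psi_def by measurable

lemma rU_eq: "rU y = (\<integral>\<^sup>+a. \<integral>\<^sup>+w. K a w y \<partial>lborel \<partial>muA)"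
  unfolding rU_def rho_def by simp

lemma rho_le: "rho T S y \<le> rU y"
  unfolding rU_eq rho_def
  by (intro nn_integral_mono) (auto split: split_indicator)

lemma F1:
  assumes [measurable]: "T \<in> sets borel" "S \<in> sets borel" "R \<in> sets borel"
  shows "(\<integral>\<^sup>+\<omega>. indicator T (A \<omega>) * indicator S (W \<omega>) * indicator R (Y \<omega>) \<partial>M) =
    (\<integral>\<^sup>+y. indicator R y * rho T S y \<partial>lborel)"
proof -
  have "(\<integral>\<^sup>+\<omega>. indicator T (A \<omega>) * indicator S (W \<omega>) * indicator R (Y \<omega>) \<partial>M) =
    (\<integral>\<^sup>+y. \<integral>\<^sup>+a. \<integral>\<^sup>+w. K a w y * (indicator T a * indicator S w * indicator R y) \<partial>lborel \<partial>muA \<partial>lborel)"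
    using Jpp[of "\<lambda>(a,w,y). indicator T a * indicator S w * indicator R y"] by simp
  also have "\<dots> = (\<integral>\<^sup>+y. indicator R y * rho T S y \<partial>lborel)"
  proof (rule nn_integral_cong)
    fix y
    have "(\<integral>\<^sup>+a. \<integral>\<^sup>+w. K a w y * (indicator T a * indicator S w * indicator R y) \<partial>lborel \<partial>muA) =
      (\<integral>\<^sup>+a. indicator R y * \<integral>\<^sup>+w. K a w y * indicator T a * indicator S w \<partial>lborel \<partial>muA)"
      by (rule nn_integral_cong, subst nn_integral_cmult[symmetric]) (unfold K_def, measurable, auto intro!: nn_integral_cong simp: ac_simps)
    also have "\<dots> = indicator R y * rho T S y"
      unfolding rho_def by (rule nn_integral_cmult) (unfold K_def, measurable)
    finally show "(\<integral>\<^sup>+a. \<integral>\<^sup>+w. K a w y * (indicator T a * indicator S w * indicator R y) \<partial>lborel \<partial>muA) =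
      indicator R y * rho T S y" .
  qed
  finally show ?thesis .
qed

lemma F2:
  assumes [measurable]: "\<phi> \<in> borel_measurable borel"
  shows "(\<integral>\<^sup>+\<omega>. \<phi> (Y \<omega>) \<partial>M) = (\<integral>\<^sup>+y. \<phi> y * rU y \<partial>lborel)"
proof -
  have "(\<integral>\<^sup>+\<omega>. \<phi> (Y \<omega>) \<partial>M) =
    (\<integral>\<^sup>+y. \<integral>\<^sup>+a. \<integral>\<^sup>+w. K a w y * \<phi> y \<partial>lborel \<partial>muA \<partial>lborel)"
    using Jpp[of "\<lambda>(a,w,y). \<phi> y"] by simp
  also have "\<dots> = (\<integral>\<^sup>+y. \<phi> y * rU y \<partial>lborel)"
  proof (rule nn_integral_cong)
    fix y
    have "(\<integral>\<^sup>+a. \<integral>\<^sup>+w. K a w y * \<phi> y \<partial>lborel \<partial>muA) = (\<integral>\<^sup>+a. \<phi> y * \<integral>\<^sup>+w. K a w y \<partial>lborel \<partial>muA)"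
      by (rule nn_integral_cong, subst nn_integral_cmult[symmetric]) (unfold K_def, measurable, auto intro!: nn_integral_cong simp: ac_simps)
    also have "\<dots> = \<phi> y * rU y"
      unfolding rU_eq by (rule nn_integral_cmult) (unfold K_def, measurable)
    finally show "(\<integral>\<^sup>+a. \<integral>\<^sup>+w. K a w y * \<phi> y \<partial>lborel \<partial>muA) = \<phi> y * rU y" .
  qed
  finally show ?thesis .
qed

lemma rU_total: "(\<integral>\<^sup>+y. rU y \<partial>lborel) = 1"
  using F2[of "\<lambda>_. 1"] by (simp add: emeasure_space_1)

lemma rU_fin: "AE y in lborel. rU y \<noteq> \<infinity>"
  by (rule nn_integral_noteq_infinite) (auto simp: rU_total)

lemma K_pos: "K a w y > 0"
  unfolding K_def using p2pos p3pos by simp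

lemma rU_pos: "rU y > 0"
proof -
  have inner: "(\<integral>\<^sup>+w. K a w y \<partial>lborel) > 0" for a
  proof (rule ccontr)
    assume "\<not> (\<integral>\<^sup>+w. K a w y \<partial>lborel) > 0"
    then have "(\<integral>\<^sup>+w. K a w y \<partial>lborel) = 0" by (simp add: not_gr_zero)
    then have "AE w in lborel. K a w y = 0" by (subst nn_integral_0_iff_AE[symmetric]) (unfold K_def, measurable)
    moreover have "\<And>w. K a w y \<noteq> 0" using K_pos[of a _ y] by (metis less_irrefl)
    ultimately have "AE (w::real) in lborel. False" by simp
    then show False using AE_False_gen[of lborel] by simp
  qed
  show ?thesis
  proof (rule ccontr)
    assume "\<not> rU y > 0"
    then have "rU y = 0" by (simp add: not_gr_zero)
    then have "AE a in muA. (\<integral>\<^sup>+w. K a w y \<partial>lborel) = 0"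
      unfolding rU_eq by (subst nn_integral_0_iff_AE[symmetric]) (unfold K_def, measurable)
    moreover have "\<And>a. (\<integral>\<^sup>+w. K a w y \<partial>lborel) \<noteq> 0" using inner by (metis less_irrefl)
    ultimately have "AE a in muA. False" by simp
    then show False by (simp add: MA.AE_False)
  qed
qed

lemma Psi_bound: "0 \<le> Psi T S y" "Psi T S y \<le> 1"
proof -
  show "0 \<le> Psi T S y" unfolding Psi_def by simp
  show "Psi T S y \<le> 1"
  proof (cases "rU y = \<infinity>")
    case True then show ?thesis unfolding Psi_def by simp
  next
    case False
    have "enn2real (rho T S y) \<le> enn2real (rU y)" using enn2real_mono[OF rho_le[of T S y]] False by (simp add: less_top)
    show ?thesis
    proof (cases "enn2real (rU y) > 0")
      case True
      then show ?thesis unfolding Psi_def using \<open>enn2real (rho T S y) \<le> enn2real (rU y)\<close> by (simp add: divide_le_eq_1)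
    next
      case False
      then have "enn2real (rU y) = 0" using enn2real_nonneg[of "rU y"] by linarith
      then show ?thesis unfolding Psi_def by simp
    qed
  qed
qed

lemma Psi_id:
  assumes "rU y \<noteq> \<infinity>"
  shows "ennreal (Psi T S y) * rU y = rho T S y"
proof -
  have f: "rho T S y \<noteq> \<infinity>" using rho_le[of T S y] assms by (metis infinity_ennreal_def neq_top_trans)
  have p: "enn2real (rU y) > 0" using rU_pos[of y] assms by (simp add: enn2real_positive_iff less_top)
  have "ennreal (Psi T S y) * rU y = ennreal (Psi T S y) * ennreal (enn2real (rU y))"
    using assms by (simp add: ennreal_enn2real less_top)
  also have "\<dots> = ennreal (Psi T S y * enn2real (rU y))"
    using Psi_bound by (simp add: ennreal_mult)
  also have "\<dots> = ennreal (enn2real (rho T S y))"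
    unfolding Psi_def using p by simp
  also have "\<dots> = rho T S y" using f by (simp add: ennreal_enn2real less_top)
  finally show ?thesis .
qed

end

context cimodel begin

interpretation MA: prob_space muA by (rule muA_prob)

definition "Fs = vimage_algebra (space M) Y borel"

lemma subalg: "subalgebra M Fs"
  unfolding subalgebra_def Fs_def
  using measurable_iff_sets[THEN iffD1, OF Y_meas] by (simp add: space_vimage_algebra)

interpretation FS: finite_measure_subalgebra M Fs
  by unfold_locales (rule subalg)

lemma Y_Fs[measurable]: "Y \<in> measurable Fs borel"
  unfolding Fs_def by (rule measurable_vimage_algebra1) simp

lemma nn_real_eq:
  fixes u v :: "'a \<Rightarrow> real"
  assumes [measurable]: "u \<in> borel_measurable M" "v \<in> borel_measurable M"
    and "\<And>x. 0 \<le> u x" "\<And>x. 0 \<le> v x"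
    and "(\<integral>\<^sup>+x. ennreal (u x) \<partial>M) = (\<integral>\<^sup>+x. ennreal (v x) \<partial>M)"
  shows "integral\<^sup>L M u = integral\<^sup>L M v"
  using assms by (simp add: integral_eq_nn_integral)

lemma CE:
  assumes [measurable]: "T \<in> sets borel" "S \<in> sets borel"
  shows "AE \<omega> in M. real_cond_exp M Fs (\<lambda>\<omega>. indicator T (A \<omega>) * indicator S (W \<omega>)) \<omega> = Psi T S (Y \<omega>)"
proof (rule FS.real_cond_exp_charact)
  fix B assume "B \<in> sets Fs"
  then obtain R where R[measurable]: "R \<in> sets borel" and B: "B = Y -` R \<inter> space M"
    unfolding Fs_def by (auto simp: sets_vimage_algebra2)
  have "(\<integral>x\<in>B. indicator T (A x) * indicator S (W x) \<partial>M) =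
        (\<integral>x. (indicator R (Y x) :: real) * (indicator T (A x) * indicator S (W x)) \<partial>M)"
    unfolding set_lebesgue_integral_def B
    by (intro Bochner_Integration.integral_cong) (auto split: split_indicator)
  also have "\<dots> = (\<integral>x. indicator R (Y x) * Psi T S (Y x) \<partial>M)"
  proof (rule nn_real_eq)
    show "(\<integral>\<^sup>+x. ennreal (indicator R (Y x) * (indicator T (A x) * indicator S (W x))) \<partial>M) =
      (\<integral>\<^sup>+x. ennreal (indicator R (Y x) * Psi T S (Y x)) \<partial>M)"
    proof -
      have "(\<integral>\<^sup>+x. ennreal (indicator R (Y x) * (indicator T (A x) * indicator S (W x))) \<partial>M) =
        (\<integral>\<^sup>+x. indicator T (A x) * indicator S (W x) * indicator R (Y x) \<partial>M)"
        by (intro nn_integral_cong) (auto split: split_indicator)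
      also have "\<dots> = (\<integral>\<^sup>+y. indicator R y * rho T S y \<partial>lborel)" by (rule F1) auto
      also have "\<dots> = (\<integral>\<^sup>+y. ennreal (indicator R y * Psi T S y) * rU y \<partial>lborel)"
      proof (rule nn_integral_cong_AE)
        show "AE y in lborel. indicator R y * rho T S y = ennreal (indicator R y * Psi T S y) * rU y"
          using rU_fin
        proof (rule eventually_mono)
          fix y assume "rU y \<noteq> \<infinity>"
          then show "indicator R y * rho T S y = ennreal (indicator R y * Psi T S y) * rU y"
            using Psi_id[of y T S] by (auto split: split_indicator)
        qed
      qed
      also have "\<dots> = (\<integral>\<^sup>+x. ennreal (indicator R (Y x) * Psi T S (Y x)) \<partial>M)"
        by (rule F2[symmetric]) measurable
      finally show ?thesis .
    qed
  qed (auto simp: Psi_bound)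
  also have "\<dots> = (\<integral>x\<in>B. Psi T S (Y x) \<partial>M)"
    unfolding set_lebesgue_integral_def B
    by (intro Bochner_Integration.integral_cong) (auto split: split_indicator)
  finally show "(\<integral>x\<in>B. indicator T (A x) * indicator S (W x) \<partial>M) = (\<integral>x\<in>B. Psi T S (Y x) \<partial>M)" .
next
  show "integrable M (\<lambda>\<omega>. (indicator T (A \<omega>) :: real) * indicator S (W \<omega>))"
    by (intro integrable_const_bound[where B=1]) (auto split: split_indicator)
  show "integrable M (\<lambda>\<omega>. Psi T S (Y \<omega>))"
    by (intro integrable_const_bound[where B=1]) (auto simp: Psi_bound)
  show "(\<lambda>\<omega>. Psi T S (Y \<omega>)) \<in> borel_measurable Fs" by measurable
qed

end

lemma borel_rat: "sets (borel :: real measure) = sigma_sets UNIV ((\<lambda>q. {q<..}) ` \<rat>)"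
proof -
  have b: "sets (borel :: real measure) = sigma_sets UNIV (range greaterThan)"
    by (subst borel_Ioi) simp
  have "sigma_sets UNIV (range greaterThan) = sigma_sets (UNIV::real set) ((\<lambda>q. {q<..}) ` \<rat>)"
  proof
    show "sigma_sets UNIV ((\<lambda>q. {q<..}) ` \<rat>) \<subseteq> sigma_sets (UNIV::real set) (range greaterThan)"
      by (rule sigma_sets_mono') auto
    show "sigma_sets UNIV (range greaterThan) \<subseteq> sigma_sets (UNIV::real set) ((\<lambda>q. {q<..}) ` \<rat>)"
    proof (rule sigma_sets_mono, safe)
      fix x :: real
      have eq: "{x<..} = \<Union> ((\<lambda>q. {q<..}) ` {q\<in>\<rat>. x < q})"
      proof
        show "{x<..} \<subseteq> \<Union> ((\<lambda>q. {q<..}) ` {q\<in>\<rat>. x < q})"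
        proof
          fix z assume "z \<in> {x<..}"
          then obtain q where "q \<in> \<rat>" "x < q" "q < z" using Rats_dense_in_real[of x z] by auto
          then show "z \<in> \<Union> ((\<lambda>q. {q<..}) ` {q\<in>\<rat>. x < q})" by auto
        qed
      qed auto
      have "\<Union> ((\<lambda>q. {q<..}) ` {q\<in>\<rat>. x < q}) \<in> sigma_sets UNIV ((\<lambda>q. {q<..}) ` \<rat>)"
      proof (rule sigma_sets_UNION)
        show "countable ((\<lambda>q. {q<..}) ` {q\<in>\<rat>. x < q})"
          by (rule countable_image) (rule countable_subset[OF _ countable_rat], auto)
      qed auto
      then show "greaterThan x \<in> sigma_sets UNIV ((\<lambda>q. {q<..}) ` \<rat>)"
        using eq by (simp add: greaterThan_def)
    qed
  qed
  then show ?thesis using b by simp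
qed

lemma measure_eq_rat:
  fixes N1 N2 :: "real measure"
  assumes s1: "sets N1 = sets borel" and s2: "sets N2 = sets borel"
    and eq: "\<And>q. q \<in> \<rat> \<Longrightarrow> emeasure N1 {q<..} = emeasure N2 {q<..}"
    and fin: "\<And>q. q \<in> \<rat> \<Longrightarrow> emeasure N1 {q<..} \<noteq> \<infinity>"
  shows "N1 = N2"
proof (rule measure_eqI_generator_eq_countable[where E="(\<lambda>q. {q<..}) ` \<rat>" and A="(\<lambda>q. {q<..}) ` \<rat>" and \<Omega>=UNIV])
  have I: "{p<..} \<inter> {q<..} \<in> (\<lambda>q. {q<..}) ` \<rat>" if "p \<in> \<rat>" "q \<in> \<rat>" for p q :: real
  proof -
    have "{p<..} \<inter> {q<..} = {max p q<..}" by auto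
    moreover have "max p q \<in> \<rat>" using that by (simp add: max_def)
    ultimately show ?thesis by blast
  qed
  show "Int_stable ((\<lambda>q::real. {q<..}) ` \<rat>)"
    unfolding Int_stable_def using I by blast
  show "sets N1 = sigma_sets UNIV ((\<lambda>q. {q<..}) ` \<rat>)" using s1 borel_rat by simp
  show "sets N2 = sigma_sets UNIV ((\<lambda>q. {q<..}) ` \<rat>)" using s2 borel_rat by simp
  show "\<Union> ((\<lambda>q. {q<..}) ` \<rat>) = (UNIV::real set)"
  proof -
    have "z \<in> \<Union> ((\<lambda>q. {q<..}) ` \<rat>)" for z :: real
      using Rats_dense_in_real[of "z - 1" z] by auto
    then show ?thesis by auto
  qed
qed (use eq fin countable_rat in auto)

context cimodel begin

interpretation MA: prob_space muA by (rule muA_prob)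
interpretation FS: finite_measure_subalgebra M Fs by unfold_locales (rule subalg)

lemma CI_rho:
  assumes ci: "cond_indep M Yh A Y" and Yh: "\<And>\<omega>. \<omega> \<in> space M \<Longrightarrow> Yh \<omega> = \<beta> * W \<omega>" and b: "\<beta> \<noteq> 0"
    and [measurable]: "T \<in> sets borel" "S \<in> sets borel"
  shows "AE y in lborel. rU y \<noteq> \<infinity> \<longrightarrow> rho T S y * rU y = rho UNIV S y * rho T UNIV y"
proof -
  have Yhm[measurable]: "Yh \<in> borel_measurable M"
    using measurable_cong[of M Yh "\<lambda>\<omega>. \<beta> * W \<omega>"] Yh by simp
  define S' where "S' = (\<lambda>u. u / \<beta>) -` S"
  have dm: "(\<lambda>u::real. u / \<beta>) \<in> borel_measurable borel" by simp
  have S'm[measurable]: "S' \<in> sets borel"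
    using measurable_sets[OF dm \<open>S \<in> sets borel\<close>] unfolding S'_def by simp
  have ind: "indicator S' (Yh x) = indicator S (W x)" if "x \<in> space M" for x
    using Yh[OF that] b unfolding S'_def by (simp split: split_indicator)
  have gs: "gen_sigma M Y = Fs" unfolding gen_sigma_def Fs_def ..
  from ci have "AE \<omega> in M.
          real_cond_exp M Fs (\<lambda>x. indicator S' (Yh x) * indicator T (A x)) \<omega> =
          real_cond_exp M Fs (\<lambda>x. indicator S' (Yh x)) \<omega> *
          real_cond_exp M Fs (\<lambda>x. indicator T (A x)) \<omega>"
    unfolding cond_indep_def gs using S'm by auto
  moreover have "AE \<omega> in M. real_cond_exp M Fs (\<lambda>x. indicator S' (Yh x) * indicator T (A x)) \<omega> =
      real_cond_exp M Fs (\<lambda>\<omega>. indicator T (A \<omega>) * indicator S (W \<omega>)) \<omega>"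
    by (rule FS.real_cond_exp_cong) (auto simp: ind)
  moreover have "AE \<omega> in M. real_cond_exp M Fs (\<lambda>x. indicator S' (Yh x)) \<omega> =
      real_cond_exp M Fs (\<lambda>\<omega>. indicator UNIV (A \<omega>) * indicator S (W \<omega>)) \<omega>"
    by (rule FS.real_cond_exp_cong) (auto simp: ind)
  moreover have "AE \<omega> in M. real_cond_exp M Fs (\<lambda>x. indicator T (A x)) \<omega> =
      real_cond_exp M Fs (\<lambda>\<omega>. indicator T (A \<omega>) * indicator UNIV (W \<omega>)) \<omega>"
    by (rule FS.real_cond_exp_cong) auto
  moreover have "AE \<omega> in M. real_cond_exp M Fs (\<lambda>\<omega>. indicator T (A \<omega>) * indicator S (W \<omega>)) \<omega> = Psi T S (Y \<omega>)"
    by (rule CE) auto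
  moreover have "AE \<omega> in M. real_cond_exp M Fs (\<lambda>\<omega>. indicator UNIV (A \<omega>) * indicator S (W \<omega>)) \<omega> = Psi UNIV S (Y \<omega>)"
    by (rule CE) auto
  moreover have "AE \<omega> in M. real_cond_exp M Fs (\<lambda>\<omega>. indicator T (A \<omega>) * indicator UNIV (W \<omega>)) \<omega> = Psi T UNIV (Y \<omega>)"
    by (rule CE) auto
  ultimately have ae: "AE \<omega> in M. Psi T S (Y \<omega>) = Psi UNIV S (Y \<omega>) * Psi T UNIV (Y \<omega>)"
    by eventually_elim metis
  define N where "N = {y. Psi T S y \<noteq> Psi UNIV S y * Psi T UNIV y}"
  have Nm[measurable]: "N \<in> sets borel" unfolding N_def by measurable
  have m1: "(\<lambda>\<omega>. indicator N (Y \<omega>) :: ennreal) \<in> borel_measurable M" by measurable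
  have m2: "(\<lambda>y. indicator N y * rU y :: ennreal) \<in> borel_measurable lborel" by measurable
  have "AE \<omega> in M. (indicator N (Y \<omega>) :: ennreal) = 0" using ae by eventually_elim (simp add: N_def)
  then have "(\<integral>\<^sup>+\<omega>. indicator N (Y \<omega>) \<partial>M) = 0" using nn_integral_0_iff_AE[OF m1] by simp
  moreover have "(\<integral>\<^sup>+\<omega>. indicator N (Y \<omega>) \<partial>M) = (\<integral>\<^sup>+y. indicator N y * rU y \<partial>lborel)"
    by (rule F2) measurable
  ultimately have "(\<integral>\<^sup>+y. indicator N y * rU y \<partial>lborel) = 0" by simp
  then have "AE y in lborel. indicator N y * rU y = 0" using nn_integral_0_iff_AE[OF m2] by simp
  then have aeN: "AE y in lborel. y \<notin> N"
  proof (rule eventually_mono)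
    fix y assume "indicator N y * rU y = 0"
    then show "y \<notin> N" using rU_pos[of y] by (auto split: split_indicator)
  qed
  show ?thesis using aeN
  proof (rule eventually_mono)
    fix y assume y: "y \<notin> N"
    show "rU y \<noteq> \<infinity> \<longrightarrow> rho T S y * rU y = rho UNIV S y * rho T UNIV y"
    proof
      assume f: "rU y \<noteq> \<infinity>"
      have "rho T S y * rU y = ennreal (Psi T S y) * rU y * rU y" using Psi_id[OF f, of T S] by simp
      also have "\<dots> = ennreal (Psi UNIV S y * Psi T UNIV y) * rU y * rU y" using y unfolding N_def by simp
      also have "\<dots> = (ennreal (Psi UNIV S y) * rU y) * (ennreal (Psi T UNIV y) * rU y)"
        using Psi_bound by (simp add: ennreal_mult ac_simps)
      also have "\<dots> = rho UNIV S y * rho T UNIV y" using Psi_id[OF f] by simp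
      finally show "rho T S y * rU y = rho UNIV S y * rho T UNIV y" .
    qed
  qed
qed

end

context cimodel begin

interpretation MA: prob_space muA by (rule muA_prob)

definition "Z w y = (\<integral>\<^sup>+a. K a w y \<partial>muA)"
definition "mm a y = (\<integral>\<^sup>+w. K a w y \<partial>lborel)"

lemma PS2: "pair_sigma_finite muA lborel"
  by (simp add: pair_sigma_finite_def lborel.sigma_finite_measure_axioms MA.sigma_finite_measure_axioms)

lemma X1:
  assumes [measurable]: "T \<in> sets borel" "S \<in> sets borel"
  shows "(\<integral>\<^sup>+w. (\<integral>\<^sup>+a. K a w y * indicator T a \<partial>muA) * indicator S w \<partial>lborel) = rho T S y"
proof -
  have "(\<integral>\<^sup>+w. (\<integral>\<^sup>+a. K a w y * indicator T a \<partial>muA) * indicator S w \<partial>lborel) =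
     (\<integral>\<^sup>+w. \<integral>\<^sup>+a. K a w y * indicator T a * indicator S w \<partial>muA \<partial>lborel)"
    by (rule nn_integral_cong, rule nn_integral_multc[symmetric]) (unfold K_def, measurable)
  also have "\<dots> = (\<integral>\<^sup>+a. \<integral>\<^sup>+w. K a w y * indicator T a * indicator S w \<partial>lborel \<partial>muA)"
    by (rule pair_sigma_finite.Fubini'[OF PS2]) (unfold K_def, measurable)
  finally show ?thesis unfolding rho_def .
qed

lemma X2:
  assumes [measurable]: "S \<in> sets borel"
  shows "(\<integral>\<^sup>+w. Z w y * indicator S w \<partial>lborel) = rho UNIV S y"
  using X1[of UNIV S y] unfolding Z_def by simp

lemma X3:
  assumes [measurable]: "T \<in> sets borel"
  shows "(\<integral>\<^sup>+a. mm a y * indicator T a \<partial>muA) = rho T UNIV y"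
  unfolding rho_def mm_def
  by (rule nn_integral_cong, simp, rule nn_integral_multc[symmetric]) (unfold K_def, measurable)

lemma Zint: "(\<integral>\<^sup>+w. Z w y \<partial>lborel) = rU y"
  using X2[of UNIV y] unfolding rU_def by simp

lemma Z_meas[measurable]: "(\<lambda>w. Z w y) \<in> borel_measurable borel"
  unfolding Z_def K_def by measurable

lemma mm_meas[measurable]: "(\<lambda>a. mm a y) \<in> borel_measurable borel"
  unfolding mm_def K_def by measurable

lemma fin_mult: "(a::ennreal) \<noteq> \<infinity> \<Longrightarrow> b \<noteq> \<infinity> \<Longrightarrow> a * b \<noteq> \<infinity>"
  by (simp add: ennreal_mult_eq_top_iff)

lemma stage:
  assumes fin: "rU y \<noteq> \<infinity>"
    and H: "\<And>q q'. q \<in> \<rat> \<Longrightarrow> q' \<in> \<rat> \<Longrightarrow>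
      rho {q<..} {q'<..} y * rU y = rho UNIV {q'<..} y * rho {q<..} UNIV y"
  shows "AE w in lborel. AE a in muA. rU y * K a w y = Z w y * mm a y"
proof -
  have rfin: "rho T S y \<noteq> \<infinity>" for T S
    using rho_le[of T S y] fin by (metis infinity_ennreal_def neq_top_trans)
  have stW: "AE w in lborel. rU y * (\<integral>\<^sup>+a. K a w y * indicator {q<..} a \<partial>muA) = rho {q<..} UNIV y * Z w y"
    if q: "q \<in> \<rat>" for q
  proof -
    define f1 where "f1 = (\<lambda>w. rU y * (\<integral>\<^sup>+a. K a w y * indicator {q<..} a \<partial>muA))"
    define f2 where "f2 = (\<lambda>w. rho {q<..} UNIV y * Z w y)"
    have m1[measurable]: "f1 \<in> borel_measurable lborel" unfolding f1_def K_def by measurable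
    have m2[measurable]: "f2 \<in> borel_measurable lborel" unfolding f2_def by measurable
    have e1: "emeasure (density lborel f1) {q'<..} = rU y * rho {q<..} {q'<..} y" for q'
    proof -
      have "emeasure (density lborel f1) {q'<..} = (\<integral>\<^sup>+w. f1 w * indicator {q'<..} w \<partial>lborel)"
        by (rule emeasure_density) auto
      also have "\<dots> = (\<integral>\<^sup>+w. rU y * ((\<integral>\<^sup>+a. K a w y * indicator {q<..} a \<partial>muA) * indicator {q'<..} w) \<partial>lborel)"
        unfolding f1_def by (simp add: mult.assoc)
      also have "\<dots> = rU y * (\<integral>\<^sup>+w. (\<integral>\<^sup>+a. K a w y * indicator {q<..} a \<partial>muA) * indicator {q'<..} w \<partial>lborel)"
        by (rule nn_integral_cmult) (unfold K_def, measurable)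
      also have "\<dots> = rU y * rho {q<..} {q'<..} y" by (subst X1) auto
      finally show ?thesis .
    qed
    have e2: "emeasure (density lborel f2) {q'<..} = rho {q<..} UNIV y * rho UNIV {q'<..} y" for q'
    proof -
      have "emeasure (density lborel f2) {q'<..} = (\<integral>\<^sup>+w. f2 w * indicator {q'<..} w \<partial>lborel)"
        by (rule emeasure_density) auto
      also have "\<dots> = (\<integral>\<^sup>+w. rho {q<..} UNIV y * (Z w y * indicator {q'<..} w) \<partial>lborel)"
        unfolding f2_def by (simp add: mult.assoc)
      also have "\<dots> = rho {q<..} UNIV y * (\<integral>\<^sup>+w. Z w y * indicator {q'<..} w \<partial>lborel)"
        by (rule nn_integral_cmult) measurable
      also have "\<dots> = rho {q<..} UNIV y * rho UNIV {q'<..} y" by (subst X2) auto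
      finally show ?thesis .
    qed
    have "density lborel f1 = density lborel f2"
    proof (rule measure_eq_rat)
      fix q' :: real assume q': "q' \<in> \<rat>"
      show "emeasure (density lborel f1) {q'<..} = emeasure (density lborel f2) {q'<..}"
        unfolding e1 e2 using H[OF q q'] by (simp add: ac_simps)
      show "emeasure (density lborel f1) {q'<..} \<noteq> \<infinity>"
        unfolding e1 by (rule fin_mult[OF fin rfin])
    qed auto
    then have "AE w in lborel. f1 w = f2 w" by (intro sigma_finite_measure.density_unique[OF lborel.sigma_finite_measure_axioms]) auto
    then show ?thesis unfolding f1_def f2_def .
  qed
  have aeW: "AE w in lborel. \<forall>q\<in>\<rat>. rU y * (\<integral>\<^sup>+a. K a w y * indicator {q<..} a \<partial>muA) = rho {q<..} UNIV y * Z w y"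
    by (rule AE_ball_countable'[OF stW countable_rat])
  have aeZ: "AE w in lborel. Z w y \<noteq> \<infinity>"
    using fin by (intro nn_integral_noteq_infinite) (auto simp: Zint infinity_ennreal_def)
  show ?thesis using aeW aeZ
  proof eventually_elim
    fix w assume A1: "\<forall>q\<in>\<rat>. rU y * (\<integral>\<^sup>+a. K a w y * indicator {q<..} a \<partial>muA) = rho {q<..} UNIV y * Z w y"
      and A2: "Z w y \<noteq> \<infinity>"
    define g1 where "g1 = (\<lambda>a. rU y * K a w y)"
    define g2 where "g2 = (\<lambda>a. Z w y * mm a y)"
    have n1[measurable]: "g1 \<in> borel_measurable muA" unfolding g1_def K_def by measurable
    have n2[measurable]: "g2 \<in> borel_measurable muA" unfolding g2_def by measurable
    have h1: "emeasure (density muA g1) {q<..} = rho {q<..} UNIV y * Z w y" if "q \<in> \<rat>" for q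
    proof -
      have "emeasure (density muA g1) {q<..} = (\<integral>\<^sup>+a. g1 a * indicator {q<..} a \<partial>muA)"
        by (rule emeasure_density) auto
      also have "\<dots> = rU y * (\<integral>\<^sup>+a. K a w y * indicator {q<..} a \<partial>muA)"
        unfolding g1_def by (subst nn_integral_cmult[symmetric]) (unfold K_def, measurable, simp add: mult.assoc)
      also have "\<dots> = rho {q<..} UNIV y * Z w y" using A1 that by blast
      finally show ?thesis .
    qed
    have h2: "emeasure (density muA g2) {q<..} = Z w y * rho {q<..} UNIV y" for q
    proof -
      have "emeasure (density muA g2) {q<..} = (\<integral>\<^sup>+a. g2 a * indicator {q<..} a \<partial>muA)"
        by (rule emeasure_density) auto
      also have "\<dots> = Z w y * (\<integral>\<^sup>+a. mm a y * indicator {q<..} a \<partial>muA)"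
        unfolding g2_def by (subst nn_integral_cmult[symmetric]) (measurable, simp add: mult.assoc)
      also have "\<dots> = Z w y * rho {q<..} UNIV y" by (subst X3) auto
      finally show ?thesis .
    qed
    have "density muA g1 = density muA g2"
    proof (rule measure_eq_rat)
      fix q :: real assume q: "q \<in> \<rat>"
      show "emeasure (density muA g1) {q<..} = emeasure (density muA g2) {q<..}"
        unfolding h1[OF q] h2 by (simp add: ac_simps)
      show "emeasure (density muA g1) {q<..} \<noteq> \<infinity>"
        unfolding h1[OF q] by (rule fin_mult[OF rfin A2])
    qed auto
    then have "AE a in muA. g1 a = g2 a" by (intro MA.density_unique) auto
    then show "AE a in muA. rU y * K a w y = Z w y * mm a y" unfolding g1_def g2_def .
  qed
qed

end

lemma AE_pred_meas:
  assumes L: "sigma_finite_measure L"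
    and P: "{x \<in> space (N \<Otimes>\<^sub>M L). P (fst x) (snd x)} \<in> sets (N \<Otimes>\<^sub>M L)"
  shows "{x \<in> space N. AE y in L. P x y} \<in> sets N"
proof -
  define Q where "Q = space (N \<Otimes>\<^sub>M L) - {x \<in> space (N \<Otimes>\<^sub>M L). P (fst x) (snd x)}"
  have Q: "Q \<in> sets (N \<Otimes>\<^sub>M L)" unfolding Q_def using P by auto
  have f: "(\<lambda>x. emeasure L (Pair x -` Q)) \<in> borel_measurable N"
    using sigma_finite_measure.measurable_emeasure_Pair[OF L Q] .
  have eq: "{x \<in> space N. AE y in L. P x y} = (\<lambda>x. emeasure L (Pair x -` Q)) -` {0} \<inter> space N"
  proof (intro set_eqI iffI)
    fix x assume x: "x \<in> {x \<in> space N. AE y in L. P x y}"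
    then have xs: "x \<in> space N" by simp
    have s: "{y \<in> space L. \<not> P x y} = Pair x -` Q" using xs unfolding Q_def by (auto simp: space_pair_measure)
    have "emeasure L (Pair x -` Q) = 0"
      using x AE_iff_measurable[OF sets_Pair1[OF Q] s] by simp
    then show "x \<in> (\<lambda>x. emeasure L (Pair x -` Q)) -` {0} \<inter> space N" using xs by simp
  next
    fix x assume x: "x \<in> (\<lambda>x. emeasure L (Pair x -` Q)) -` {0} \<inter> space N"
    then have xs: "x \<in> space N" by simp
    have s: "{y \<in> space L. \<not> P x y} = Pair x -` Q" using xs unfolding Q_def by (auto simp: space_pair_measure)
    have "AE y in L. P x y"
      using x AE_iff_measurable[OF sets_Pair1[OF Q] s] by simp
    then show "x \<in> {x \<in> space N. AE y in L. P x y}" using xs by simp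
  qed
  show ?thesis unfolding eq by (rule measurable_sets[OF f]) simp
qed

context cimodel begin

interpretation MA: prob_space muA by (rule muA_prob)

definition "kk a w y = p2 (w - r*a) * p3 (y - c*w - s*a)"
definition "G a w y \<longleftrightarrow> rU y * K a w y = Z w y * mm a y"

lemma K_kk: "K a w y = ennreal (kk a w y)" unfolding K_def kk_def ..
lemma kk_pos: "kk a w y > 0" unfolding kk_def using p2pos p3pos by simp

lemma R_of_G:
  assumes f: "rU y \<noteq> \<infinity>" and g: "G a1 w1 y" "G a2 w2 y" "G a2 w1 y" "G a1 w2 y"
  shows "kk a1 w1 y * kk a2 w2 y = kk a2 w1 y * kk a1 w2 y"
proof -
  define u where "u = rU y"
  have u0: "u \<noteq> 0" unfolding u_def using rU_pos[of y] by simp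
  have ut: "u \<noteq> top" using f unfolding u_def by simp
  have "(u * u) * (K a1 w1 y * K a2 w2 y) = (u * K a1 w1 y) * (u * K a2 w2 y)" by (simp add: ac_simps)
  also have "\<dots> = (Z w1 y * mm a1 y) * (Z w2 y * mm a2 y)" using g(1,2) unfolding G_def u_def by simp
  also have "\<dots> = (Z w1 y * mm a2 y) * (Z w2 y * mm a1 y)" by (simp add: ac_simps)
  also have "\<dots> = (u * K a2 w1 y) * (u * K a1 w2 y)" using g(3,4) unfolding G_def u_def by simp
  also have "\<dots> = (u * u) * (K a2 w1 y * K a1 w2 y)" by (simp add: ac_simps)
  finally have e: "(u * u) * (K a1 w1 y * K a2 w2 y) = (u * u) * (K a2 w1 y * K a1 w2 y)" .
  have uu0: "u * u \<noteq> 0" using u0 by simp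
  have uut: "u * u \<noteq> top" using ut by (simp add: ennreal_mult_eq_top_iff)
  have "K a1 w1 y * K a2 w2 y = K a2 w1 y * K a1 w2 y"
    using e uu0 uut by (simp add: ennreal_mult_cancel_left)
  then have "ennreal (kk a1 w1 y * kk a2 w2 y) = ennreal (kk a2 w1 y * kk a1 w2 y)"
    unfolding K_kk using kk_pos by (simp add: ennreal_mult[symmetric] less_imp_le)
  then show ?thesis using kk_pos by (simp add: less_imp_le)
qed

lemma p2_cont[continuous_intros]: "continuous_on S f \<Longrightarrow> continuous_on S (\<lambda>x. p2 (f x))"
  by (rule continuous_on_compose2[OF p2c]) auto
lemma p3_cont[continuous_intros]: "continuous_on S f \<Longrightarrow> continuous_on S (\<lambda>x. p3 (f x))"
  by (rule continuous_on_compose2[OF p3c]) auto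

lemma cont_all:
  assumes ae: "AE y in lborel. AE w1 in lborel. AE w2 in lborel. kk a1 w1 y * kk a2 w2 y = kk a2 w1 y * kk a1 w2 y"
  shows "kk a1 w1 y * kk a2 w2 y = kk a2 w1 y * kk a1 w2 y"
proof -
  have s1: "AE y in lborel. AE w1 in lborel. \<forall>w2. kk a1 w1 y * kk a2 w2 y = kk a2 w1 y * kk a1 w2 y"
    using ae
  proof (rule eventually_mono)
    fix y assume "AE w1 in lborel. AE w2 in lborel. kk a1 w1 y * kk a2 w2 y = kk a2 w1 y * kk a1 w2 y"
    then show "AE w1 in lborel. \<forall>w2. kk a1 w1 y * kk a2 w2 y = kk a2 w1 y * kk a1 w2 y"
    proof (rule eventually_mono)
      fix w1 assume h: "AE w2 in lborel. kk a1 w1 y * kk a2 w2 y = kk a2 w1 y * kk a1 w2 y"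
      show "\<forall>w2. kk a1 w1 y * kk a2 w2 y = kk a2 w1 y * kk a1 w2 y"
      proof
        fix w2 show "kk a1 w1 y * kk a2 w2 y = kk a2 w1 y * kk a1 w2 y"
          by (rule AE_cont_eq[OF h]) (unfold kk_def, intro continuous_intros, intro continuous_intros)
      qed
    qed
  qed
  have s2: "AE y in lborel. \<forall>w1 w2. kk a1 w1 y * kk a2 w2 y = kk a2 w1 y * kk a1 w2 y"
    using s1
  proof (rule eventually_mono)
    fix y assume h: "AE w1 in lborel. \<forall>w2. kk a1 w1 y * kk a2 w2 y = kk a2 w1 y * kk a1 w2 y"
    show "\<forall>w1 w2. kk a1 w1 y * kk a2 w2 y = kk a2 w1 y * kk a1 w2 y"
    proof (intro allI)
      fix w1 w2
      have "AE w1 in lborel. kk a1 w1 y * kk a2 w2 y = kk a2 w1 y * kk a1 w2 y"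
        using h by (rule eventually_mono) blast
      then show "kk a1 w1 y * kk a2 w2 y = kk a2 w1 y * kk a1 w2 y"
        by (rule AE_cont_eq) (unfold kk_def, intro continuous_intros, intro continuous_intros)
    qed
  qed
  have "AE y in lborel. kk a1 w1 y * kk a2 w2 y = kk a2 w1 y * kk a1 w2 y"
    using s2 by (rule eventually_mono) blast
  then show ?thesis
    by (rule AE_cont_eq) (unfold kk_def, intro continuous_intros, intro continuous_intros)
qed

end

context cimodel begin

interpretation MA: prob_space muA by (rule muA_prob)

lemma PSl: "pair_sigma_finite lborel muA"
  by (simp add: pair_sigma_finite_def lborel.sigma_finite_measure_axioms MA.sigma_finite_measure_axioms)

lemma Z2_meas[measurable]: "(\<lambda>x. Z (fst x) (snd x)) \<in> borel_measurable (borel \<Otimes>\<^sub>M borel)"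
  unfolding Z_def K_def by measurable
lemma mm2_meas[measurable]: "(\<lambda>x. mm (fst x) (snd x)) \<in> borel_measurable (borel \<Otimes>\<^sub>M borel)"
  unfolding mm_def K_def by measurable

lemma Z_raw[measurable (raw)]:
  assumes "f \<in> borel_measurable N" "g \<in> borel_measurable N"
  shows "(\<lambda>x. Z (f x) (g x)) \<in> borel_measurable N"
  using measurable_compose[OF measurable_Pair[OF assms] Z2_meas] by simp

lemma mm_raw[measurable (raw)]:
  assumes "f \<in> borel_measurable N" "g \<in> borel_measurable N"
  shows "(\<lambda>x. mm (f x) (g x)) \<in> borel_measurable N"
  using measurable_compose[OF measurable_Pair[OF assms] mm2_meas] by simp

lemma main_AE:
  assumes ci: "cond_indep M Yh A Y" and Yh: "\<And>\<omega>. \<omega> \<in> space M \<Longrightarrow> Yh \<omega> = \<beta> * W \<omega>" and b: "\<beta> \<noteq> 0"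
  shows "AE a1 in muA. AE a2 in muA. \<forall>y w1 w2. kk a1 w1 y * kk a2 w2 y = kk a2 w1 y * kk a1 w2 y"
proof -
  have H1: "AE y in lborel. \<forall>q\<in>\<rat>. \<forall>q'\<in>\<rat>. rU y \<noteq> \<infinity> \<longrightarrow>
      rho {q<..} {q'<..} y * rU y = rho UNIV {q'<..} y * rho {q<..} UNIV y"
  proof (rule AE_ball_countable'[OF _ countable_rat])
    fix q :: real assume q: "q \<in> \<rat>"
    show "AE y in lborel. \<forall>q'\<in>\<rat>. rU y \<noteq> \<infinity> \<longrightarrow>
      rho {q<..} {q'<..} y * rU y = rho UNIV {q'<..} y * rho {q<..} UNIV y"
    proof (rule AE_ball_countable'[OF _ countable_rat])
      fix q' :: real assume "q' \<in> \<rat>"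
      show "AE y in lborel. rU y \<noteq> \<infinity> \<longrightarrow> rho {q<..} {q'<..} y * rU y = rho UNIV {q'<..} y * rho {q<..} UNIV y"
        by (rule CI_rho[OF ci Yh b]) auto
    qed
  qed
  have H2: "AE y in lborel. rU y \<noteq> \<infinity> \<and> (AE w in lborel. AE a in muA. G a w y)"
    using H1 rU_fin
  proof eventually_elim
    case (elim y)
    then have f: "rU y \<noteq> \<infinity>" by simp
    have "AE w in lborel. AE a in muA. rU y * K a w y = Z w y * mm a y"
      by (rule stage[OF f]) (use elim f in auto)
    then show ?case using f unfolding G_def by simp
  qed
  have H3: "AE y in lborel. AE a in muA. rU y \<noteq> \<infinity> \<and> (AE w in lborel. G a w y)"
    using H2
  proof (rule eventually_mono)
    fix y assume h: "rU y \<noteq> \<infinity> \<and> (AE w in lborel. AE a in muA. G a w y)"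
    have m: "{x \<in> space (lborel \<Otimes>\<^sub>M muA). G (snd x) (fst x) y} \<in> sets (lborel \<Otimes>\<^sub>M muA)"
      unfolding G_def K_def by measurable
    have "AE a in muA. AE w in lborel. G a w y"
      using h pair_sigma_finite.AE_commute[OF PSl m] by simp
    then show "AE a in muA. rU y \<noteq> \<infinity> \<and> (AE w in lborel. G a w y)"
    proof (rule eventually_mono)
      fix a assume "AE w in lborel. G a w y"
      then show "rU y \<noteq> \<infinity> \<and> (AE w in lborel. G a w y)" using h by simp
    qed
  qed
  have m2: "{x \<in> space (lborel \<Otimes>\<^sub>M muA). rU (fst x) \<noteq> \<infinity> \<and> (AE w in lborel. G (snd x) w (fst x))}
      \<in> sets (lborel \<Otimes>\<^sub>M muA)"
  proof -
    have a: "{x \<in> space (lborel \<Otimes>\<^sub>M muA). rU (fst x) \<noteq> \<infinity>} \<in> sets (lborel \<Otimes>\<^sub>M muA)" by measurable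
    have p: "{z \<in> space ((lborel \<Otimes>\<^sub>M muA) \<Otimes>\<^sub>M lborel). G (snd (fst z)) (snd z) (fst (fst z))}
        \<in> sets ((lborel \<Otimes>\<^sub>M muA) \<Otimes>\<^sub>M lborel)"
      unfolding G_def K_def by measurable
    have bb: "{x \<in> space (lborel \<Otimes>\<^sub>M muA). AE w in lborel. G (snd x) w (fst x)} \<in> sets (lborel \<Otimes>\<^sub>M muA)"
      using AE_pred_meas[OF lborel.sigma_finite_measure_axioms p] by simp
    have "{x \<in> space (lborel \<Otimes>\<^sub>M muA). rU (fst x) \<noteq> \<infinity> \<and> (AE w in lborel. G (snd x) w (fst x))} =
      {x \<in> space (lborel \<Otimes>\<^sub>M muA). rU (fst x) \<noteq> \<infinity>} \<inter> {x \<in> space (lborel \<Otimes>\<^sub>M muA). AE w in lborel. G (snd x) w (fst x)}"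
      by auto
    then show ?thesis using a bb by simp
  qed
  have H4: "AE a in muA. AE y in lborel. rU y \<noteq> \<infinity> \<and> (AE w in lborel. G a w y)"
    using H3 pair_sigma_finite.AE_commute[OF PSl m2] by simp
  show ?thesis using H4
  proof (rule eventually_mono)
    fix a1 assume h1: "AE y in lborel. rU y \<noteq> \<infinity> \<and> (AE w in lborel. G a1 w y)"
    show "AE a2 in muA. \<forall>y w1 w2. kk a1 w1 y * kk a2 w2 y = kk a2 w1 y * kk a1 w2 y" using H4
    proof (rule eventually_mono)
      fix a2 assume h2: "AE y in lborel. rU y \<noteq> \<infinity> \<and> (AE w in lborel. G a2 w y)"
      have "AE y in lborel. AE w1 in lborel. AE w2 in lborel. kk a1 w1 y * kk a2 w2 y = kk a2 w1 y * kk a1 w2 y"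
        using h1 h2
      proof eventually_elim
        case (elim y)
        then have f: "rU y \<noteq> \<infinity>" and g1: "AE w in lborel. G a1 w y" and g2: "AE w in lborel. G a2 w y" by auto
        show ?case using g1 g2
        proof eventually_elim
          case (elim w1)
          then have e1: "G a1 w1 y" "G a2 w1 y" by auto
          show ?case using g1 g2
          proof eventually_elim
            case (elim w2)
            then show ?case using R_of_G[OF f e1(1)] e1(2) by blast
          qed
        qed
      qed
      then show "\<forall>y w1 w2. kk a1 w1 y * kk a2 w2 y = kk a2 w1 y * kk a1 w2 y" using cont_all by blast
    qed
  qed
qed

end

theorem theorem1:
  fixes M :: "'a measure"
    and A E_X E_H E_Y X H Y E Yhat :: "'a \<Rightarrow> real"
    and pA :: "real \<Rightarrow> ennreal"
    and p_EX pE :: "real \<Rightarrow> real"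
    and q b c d \<alpha> \<beta> :: real
  assumes "prob_space M"
    and "prob_space.indep_vars M (\<lambda>_. borel)
           (\<lambda>i::nat. (if i = 0 then A else if i = 1 then E_X else if i = 2 then E_H else E_Y))
           {0, 1, 2, 3}"
    and "\<And>\<omega>. \<omega> \<in> space M \<Longrightarrow> X \<omega> = q * A \<omega> + E_X \<omega>"
    and "\<And>\<omega>. \<omega> \<in> space M \<Longrightarrow> H \<omega> = b * A \<omega> + E_H \<omega>"
    and "\<And>\<omega>. \<omega> \<in> space M \<Longrightarrow> Y \<omega> = c * X \<omega> + d * H \<omega> + E_Y \<omega>"
    and "\<And>\<omega>. \<omega> \<in> space M \<Longrightarrow> E \<omega> = E_Y \<omega> + d * E_H \<omega>"
    and "\<And>\<omega>. \<omega> \<in> space M \<Longrightarrow> Yhat \<omega> = \<alpha> * A \<omega> + \<beta> * X \<omega>"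
    and "\<beta> \<noteq> 0"
    and "c \<noteq> 0"
    and "q * c + b * d \<noteq> 0"
    and "distributed M lborel A pA"
    and "distributed M lborel E_X (\<lambda>x. ennreal (p_EX x))"
    and "distributed M lborel E (\<lambda>x. ennreal (pE x))"
    and "\<And>x. p_EX x > 0"
    and "\<And>x. pE x > 0"
    and "thrice_differentiable (\<lambda>x. ln (p_EX x))"
    and "thrice_differentiable (\<lambda>x. ln (pE x))"
    and "\<not> (gaussian_rv M E_X \<and> gaussian_rv M E)"
  shows "\<not> cond_indep M Yhat A Y"
proof
  assume ci: "cond_indep M Yhat A Y"
  note PM = assms(1)
  interpret P: prob_space M by (rule assms(1))
  define r where "r = (\<alpha> + \<beta>*q)/\<beta>"
  define s where "s = (q*c + b*d) - c*r"
  define W where "W = (\<lambda>\<omega>. r * A \<omega> + E_X \<omega>)"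
  define Xf where "Xf = (\<lambda>i::nat. (if i = 0 then A else if i = 1 then E_X else if i = 2 then E_H else E_Y))"
  define f2 where "f2 = (\<lambda>x. ln (p_EX x))"
  define f3 where "f3 = (\<lambda>x. ln (pE x))"
  have ind: "P.indep_vars (\<lambda>_. borel) Xf {0, 1, 2, 3}" using assms(2) unfolding Xf_def .
  have Am[measurable]: "A \<in> borel_measurable M"
    using distributed_measurable[OF assms(11)] by (simp add: measurable_cong_sets[OF refl sets_lborel])
  have d1: "distr M (borel \<Otimes>\<^sub>M (borel \<Otimes>\<^sub>M borel)) (\<lambda>\<omega>. (A \<omega>, E_X \<omega>, E_Y \<omega> + d * E_H \<omega>)) =
      distr M borel A \<Otimes>\<^sub>M distr M (borel \<Otimes>\<^sub>M borel) (\<lambda>\<omega>. (E_X \<omega>, E_Y \<omega> + d * E_H \<omega>))"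
  proof -
    have F: "(\<lambda>f. f 0) \<in> measurable (PiM {0::nat} (\<lambda>_. borel)) borel"
      by (rule measurable_component_singleton) simp
    have G: "(\<lambda>g. (g 1, g 3 + d * g 2)) \<in> measurable (PiM {1::nat,2,3} (\<lambda>_. borel)) (borel \<Otimes>\<^sub>M borel)"
    proof -
      have "(\<lambda>g. g (1::nat)) \<in> measurable (PiM {1::nat,2,3} (\<lambda>_. borel)) borel" by (rule measurable_component_singleton) simp
      moreover have "(\<lambda>g. g (2::nat)) \<in> measurable (PiM {1::nat,2,3} (\<lambda>_. borel)) borel" by (rule measurable_component_singleton) simp
      moreover have "(\<lambda>g. g (3::nat)) \<in> measurable (PiM {1::nat,2,3} (\<lambda>_. borel)) (borel :: real measure)" by (rule measurable_component_singleton) simp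
      ultimately show ?thesis by measurable
    qed
    have "distr M (borel \<Otimes>\<^sub>M (borel \<Otimes>\<^sub>M borel)) (\<lambda>\<omega>. ((\<lambda>f. f 0) (restrict (\<lambda>i. Xf i \<omega>) {0}), (\<lambda>g. (g 1, g 3 + d * g 2)) (restrict (\<lambda>i. Xf i \<omega>) {1,2,3}))) =
      distr M borel (\<lambda>\<omega>. (\<lambda>f. f 0) (restrict (\<lambda>i. Xf i \<omega>) {0})) \<Otimes>\<^sub>M distr M (borel \<Otimes>\<^sub>M borel) (\<lambda>\<omega>. (\<lambda>g. (g 1, g 3 + d * g 2)) (restrict (\<lambda>i. Xf i \<omega>) {1,2,3}))"
      by (rule P.indep_split[OF ind _ _ _ F G]) auto
    then show ?thesis by (simp add: Xf_def)
  qed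
  have d2: "distr M (borel \<Otimes>\<^sub>M borel) (\<lambda>\<omega>. (E_X \<omega>, E_Y \<omega> + d * E_H \<omega>)) =
      distr M borel E_X \<Otimes>\<^sub>M distr M borel (\<lambda>\<omega>. E_Y \<omega> + d * E_H \<omega>)"
  proof -
    have F: "(\<lambda>f. f 1) \<in> measurable (PiM {1::nat} (\<lambda>_. borel)) borel"
      by (rule measurable_component_singleton) simp
    have G: "(\<lambda>g. g 3 + d * g 2) \<in> measurable (PiM {2::nat,3} (\<lambda>_. borel)) borel"
    proof -
      have "(\<lambda>g. g (2::nat)) \<in> measurable (PiM {2::nat,3} (\<lambda>_. borel)) borel" by (rule measurable_component_singleton) simp
      moreover have "(\<lambda>g. g (3::nat)) \<in> measurable (PiM {2::nat,3} (\<lambda>_. borel)) (borel :: real measure)" by (rule measurable_component_singleton) simp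
      ultimately show ?thesis by measurable
    qed
    have "distr M (borel \<Otimes>\<^sub>M borel) (\<lambda>\<omega>. ((\<lambda>f. f 1) (restrict (\<lambda>i. Xf i \<omega>) {1}), (\<lambda>g. g 3 + d * g 2) (restrict (\<lambda>i. Xf i \<omega>) {2,3}))) =
      distr M borel (\<lambda>\<omega>. (\<lambda>f. f 1) (restrict (\<lambda>i. Xf i \<omega>) {1})) \<Otimes>\<^sub>M distr M borel (\<lambda>\<omega>. (\<lambda>g. g 3 + d * g 2) (restrict (\<lambda>i. Xf i \<omega>) {2,3}))"
      by (rule P.indep_split[OF ind _ _ _ F G]) auto
    then show ?thesis by (simp add: Xf_def)
  qed
  have dX: "distr M borel E_X = density lborel (\<lambda>x. ennreal (p_EX x))"
  proof -
    have "distr M borel E_X = distr M lborel E_X" by (rule distr_cong) auto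
    then show ?thesis using distributed_distr_eq_density[OF assms(12)] by simp
  qed
  have dE: "distr M borel (\<lambda>\<omega>. E_Y \<omega> + d * E_H \<omega>) = density lborel (\<lambda>x. ennreal (pE x))"
  proof -
    have "distr M borel (\<lambda>\<omega>. E_Y \<omega> + d * E_H \<omega>) = distr M lborel E" by (rule distr_cong) (auto simp: assms(6))
    then show ?thesis using distributed_distr_eq_density[OF assms(13)] by simp
  qed
  have jointD: "distr M (borel \<Otimes>\<^sub>M (borel \<Otimes>\<^sub>M borel)) (\<lambda>\<omega>. (A \<omega>, E_X \<omega>, E \<omega>)) =
       distr M borel A \<Otimes>\<^sub>M (density lborel (\<lambda>x. ennreal (p_EX x)) \<Otimes>\<^sub>M density lborel (\<lambda>x. ennreal (pE x)))"
  proof -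
    have "distr M (borel \<Otimes>\<^sub>M (borel \<Otimes>\<^sub>M borel)) (\<lambda>\<omega>. (A \<omega>, E_X \<omega>, E \<omega>)) =
        distr M (borel \<Otimes>\<^sub>M (borel \<Otimes>\<^sub>M borel)) (\<lambda>\<omega>. (A \<omega>, E_X \<omega>, E_Y \<omega> + d * E_H \<omega>))"
      by (rule distr_cong) (auto simp: assms(6))
    then show ?thesis using d1 d2 dX dE by simp
  qed
  have td2': "\<forall>k<3. \<forall>x. (deriv ^^ k) f2 differentiable (at x)" using assms(16) unfolding thrice_differentiable_def f2_def .
  have td3': "\<forall>k<3. \<forall>x. (deriv ^^ k) f3 differentiable (at x)" using assms(17) unfolding thrice_differentiable_def f3_def .
  have f2d: "\<And>x. f2 differentiable (at x)" using td2'[rule_format, of 0] by simp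
  have f3d: "\<And>x. f3 differentiable (at x)" using td3'[rule_format, of 0] by simp
  have f2dd: "\<And>x. deriv f2 differentiable (at x)" using td2'[rule_format, of 1] by simp
  have f3dd: "\<And>x. deriv f3 differentiable (at x)" using td3'[rule_format, of 1] by simp
  have cont: "continuous_on UNIV g" if "\<And>x. g differentiable (at x)" for g :: "real \<Rightarrow> real"
    using that by (intro differentiable_imp_continuous_on differentiable_at_imp_differentiable_on) auto
  have pX: "p_EX = (\<lambda>x. exp (f2 x))" unfolding f2_def using assms(14) by (intro ext) simp
  have pEe: "pE = (\<lambda>x. exp (f3 x))" unfolding f3_def using assms(15) by (intro ext) simp
  have p2c: "continuous_on UNIV p_EX" unfolding pX by (intro continuous_intros cont f2d)
  have p3c: "continuous_on UNIV pE" unfolding pEe by (intro continuous_intros cont f3d)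
  have Wdef: "\<And>\<omega>. \<omega> \<in> space M \<Longrightarrow> W \<omega> = r * A \<omega> + E_X \<omega>" unfolding W_def by simp
  have Ydef: "\<And>\<omega>. \<omega> \<in> space M \<Longrightarrow> Y \<omega> = c * W \<omega> + s * A \<omega> + E \<omega>"
    unfolding W_def s_def using assms(3-6) by (simp add: algebra_simps)
  interpret CM: cimodel M A E_X E W Y p_EX pE r s c
    by unfold_locales (use Am jointD assms(12,13,14,15,9) p2c p3c Wdef Ydef in auto)
  have Yh: "\<And>\<omega>. \<omega> \<in> space M \<Longrightarrow> Yhat \<omega> = \<beta> * W \<omega>"
    unfolding W_def r_def using assms(3,7,8) by (simp add: field_simps)
  have mainAE: "AE a1 in CM.muA. AE a2 in CM.muA. \<forall>y w1 w2. CM.kk a1 w1 y * CM.kk a2 w2 y = CM.kk a2 w1 y * CM.kk a1 w2 y"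
    by (rule CM.main_AE[OF ci Yh assms(8)])
  define Grp where "Grp = {dd. \<forall>v x. deriv f2 v - deriv f2 (v + r*dd) = c * (deriv f3 x - deriv f3 (x + s*dd))}"
  have Pd: "a1 - a2 \<in> Grp" if "\<forall>y w1 w2. CM.kk a1 w1 y * CM.kk a2 w2 y = CM.kk a2 w1 y * CM.kk a1 w2 y" for a1 a2
  proof -
    have R: "exp (f2 (w1 - r*a1)) * exp (f3 (y - c*w1 - s*a1)) * (exp (f2 (w2 - r*a2)) * exp (f3 (y - c*w2 - s*a2)))
       = exp (f2 (w1 - r*a2)) * exp (f3 (y - c*w1 - s*a2)) * (exp (f2 (w2 - r*a1)) * exp (f3 (y - c*w2 - s*a1)))" for y w1 w2
      using that[unfolded CM.kk_def] unfolding pX pEe by blast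
    show ?thesis unfolding Grp_def using deriv_from_R[OF f2d f3d R] by blast
  qed
  have aeG: "AE a1 in CM.muA. AE a2 in CM.muA. a1 - a2 \<in> Grp"
    using mainAE by (auto elim!: eventually_mono intro: Pd)
  have g0: "0 \<in> Grp" unfolding Grp_def by simp
  have gadd: "x + y \<in> Grp" if "x \<in> Grp" "y \<in> Grp" for x y
  proof -
    have "deriv f2 v - deriv f2 (v + r*(x+y)) = c * (deriv f3 z - deriv f3 (z + s*(x+y)))" for v z
    proof -
      have a: "deriv f2 v - deriv f2 (v + r*x) = c * (deriv f3 z - deriv f3 (z + s*x))" using that(1) unfolding Grp_def by blast
      have b: "deriv f2 (v + r*x) - deriv f2 ((v + r*x) + r*y) = c * (deriv f3 (z + s*x) - deriv f3 ((z + s*x) + s*y))"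
        using that(2) unfolding Grp_def by blast
      have "v + r*(x+y) = (v + r*x) + r*y" "z + s*(x+y) = (z + s*x) + s*y" by (simp_all add: algebra_simps)
      then show ?thesis using a b by (simp add: algebra_simps)
    qed
    then show ?thesis unfolding Grp_def by blast
  qed
  have gneg: "- x \<in> Grp" if "x \<in> Grp" for x
  proof -
    have "deriv f2 v - deriv f2 (v + r*(-x)) = c * (deriv f3 z - deriv f3 (z + s*(-x)))" for v z
    proof -
      have a: "deriv f2 (v - r*x) - deriv f2 ((v - r*x) + r*x) = c * (deriv f3 (z - s*x) - deriv f3 ((z - s*x) + s*x))"
        using that unfolding Grp_def by blast
      then show ?thesis by (simp add: algebra_simps)
    qed
    then show ?thesis unfolding Grp_def by blast
  qed
  have dc2: "continuous_on UNIV (deriv f2)" by (rule cont[OF f2dd])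
  have dc3: "continuous_on UNIV (deriv f3)" by (rule cont[OF f3dd])
  have gcl: "closed Grp"
  proof -
    have "Grp = (\<Inter>v. \<Inter>x. {dd. deriv f2 v - deriv f2 (v + r*dd) = c * (deriv f3 x - deriv f3 (x + s*dd))})"
      unfolding Grp_def by auto
    moreover have "closed {dd. deriv f2 v - deriv f2 (v + r*dd) = c * (deriv f3 x - deriv f3 (x + s*dd))}" for v x
    proof (rule closed_Collect_eq)
      show "continuous_on UNIV (\<lambda>dd. deriv f2 v - deriv f2 (v + r*dd))"
        by (intro continuous_intros continuous_on_compose2[OF dc2]) auto
      show "continuous_on UNIV (\<lambda>dd. c * (deriv f3 x - deriv f3 (x + s*dd)))"
        by (intro continuous_intros continuous_on_compose2[OF dc3]) auto
    qed
    ultimately show ?thesis by auto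
  qed
  interpret MA: prob_space CM.muA by (rule CM.muA_prob)
  have atom: "emeasure CM.muA {x} = 0" for x
  proof -
    have "CM.muA = distr M lborel A" unfolding CM.muA_def by (rule distr_cong) auto
    also have "\<dots> = density lborel pA" using distributed_distr_eq_density[OF assms(11)] .
    finally have e: "CM.muA = density lborel pA" .
    have pm: "pA \<in> borel_measurable lborel" using distributed_borel_measurable[OF assms(11)] .
    have ae0: "AE y in lborel. y \<in> {x} \<longrightarrow> pA y = 0"
      using AE_lborel_singleton[of x] by (rule eventually_mono) simp
    have "{x} \<in> null_sets (density lborel pA)"
      using ae0 null_sets_density_iff[OF pm, of "{x}"] by simp
    then show ?thesis unfolding e by auto
  qed
  show False
  proof (cases "Grp = UNIV")
    case False
    then have cG: "countable Grp" using closed_subgroup_dich[OF g0 gadd gneg gcl] by blast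
    have "AE a1 in CM.muA. False" using aeG
    proof (rule eventually_mono)
      fix a1 assume h: "AE a2 in CM.muA. a1 - a2 \<in> Grp"
      have "AE a2 in CM.muA. a2 \<notin> (\<lambda>g. a1 - g) ` Grp"
        by (rule AE_discrete_difference) (use cG atom in auto)
      with h have "AE a2 in CM.muA. False" by eventually_elim force
      then show False by (simp add: MA.AE_False)
    qed
    then show False by (simp add: MA.AE_False)
  next
    case True
    have Gall: "\<And>dd v x. deriv f2 v - deriv f2 (v + r*dd) = c * (deriv f3 x - deriv f3 (x + s*dd))"
      using True unfolding Grp_def by blast
    have rs: "r \<noteq> 0 \<or> s \<noteq> 0" using assms(10) unfolding s_def by auto
    have td2: "thrice_differentiable f2" unfolding f2_def by (rule assms(16))
    have td3: "thrice_differentiable f3" unfolding f3_def by (rule assms(17))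
    have dis: "(\<exists>m n. \<forall>x. f2 x = 0/2*x^2 + m*x + n) \<or> (\<exists>m n. \<forall>x. f3 x = 0/2*x^2 + m*x + n) \<or>
      ((\<exists>l m n. \<forall>x. f2 x = l/2*x^2 + m*x + n) \<and> (\<exists>l m n. \<forall>x. f3 x = l/2*x^2 + m*x + n))"
      by (rule final_analysis[OF td2 td3 assms(9) rs Gall])
    show False
    proof -
      { fix m n assume "\<forall>x. f2 x = 0/2*x^2 + m*x + n"
        then have "(0::real) < 0 \<and> gaussian_rv M E_X"
          by (intro gauss_or_false[OF assms(1) assms(12) assms(14)]) (simp add: f2_def)
        then have False by simp }
      moreover
      { fix m n assume "\<forall>x. f3 x = 0/2*x^2 + m*x + n"
        then have "(0::real) < 0 \<and> gaussian_rv M E"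
          by (intro gauss_or_false[OF assms(1) assms(13) assms(15)]) (simp add: f3_def)
        then have False by simp }
      moreover
      { fix l2 m2 n2 l3 m3 n3 assume "\<forall>x. f2 x = l2/2*x^2 + m2*x + n2" "\<forall>x. f3 x = l3/2*x^2 + m3*x + n3"
        then have "l2 < 0 \<and> gaussian_rv M E_X" "l3 < 0 \<and> gaussian_rv M E"
          by (intro gauss_or_false[OF assms(1) assms(12) assms(14)] gauss_or_false[OF assms(1) assms(13) assms(15)];
              simp add: f2_def f3_def)+
        then have False using assms(18) by blast }
      ultimately show False using dis by blast
    qed
  qed
qed

end
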